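(* Let $\mathrm{M}=\langle e_1+I,\ e_2+I,\ -I\rangle$ and $\Delta=\langle e_1+I,\ e_1/2+\sqrt3 e_2/2+I,\ -I\rangle$, where $e_1,e_2$ are the standard basis vectors of $E^2$. Let $\mathrm{K}=\langle (e_1/2+I)_\star,(e_2/2+I)_\star\rangle\subseteq\mathrm{Aff}(\mathrm{M})$ and let $$A=\begin{pmatrix}-1&0\\0&1\end{pmatrix},\ B=\begin{pmatrix}-1&1\\0&1\end{pmatrix},\ C=\begin{pmatrix}0&1\\1&0\end{pmatrix},\ D=\begin{pmatrix}1&-1/2\\0&\sqrt3/2\end{pmatrix}.$$ Then $\mathrm{Sym}(\mathrm{M})=\langle \mathrm{K}, A_\star, C_\star\rangle$, $D\mathrm{M}D^{-1}=\Delta$, the map $D_\sharp:\mathrm{Aff}(\mathrm{M})\to\mathrm{Aff}(\Delta)$ is an isomorphism, and $\mathrm{Sym}(\Delta)=D_\sharp(\langle \mathrm{K}, B_\star, C_\star\rangle)$.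
   Context: Affine maps of $E^2$ are written $a+A$ (meaning $x\mapsto a+Ax$); $a+I$ is translation by $a$. For a 2-space group $\mathrm{M}$ (a discrete group of isometries of $E^2$ with compact quotient), let $N_A(\mathrm{M})$ be its normalizer in the affine group of $E^2$. Each $a+A\in N_A(\mathrm{M})$ induces an affinity $(a+A)_\star:\mathrm{M}x\mapsto\mathrm{M}(a+Ax)$ of the flat orbifold $E^2/\mathrm{M}$; $\mathrm{Aff}(\mathrm{M})$ is the group of all such affinities, and $\mathrm{Sym}(\mathrm{M})=\mathrm{Isom}(E^2/\mathrm{M})$ is its subgroup of isometries of $E^2/\mathrm{M}$. For an affine map $\phi$ with $\phi\mathrm{M}\phi^{-1}=\Delta$, $\phi_\sharp:\mathrm{Aff}(\mathrm{M})\to\mathrm{Aff}(\Delta)$ is defined by $\phi_\sharp((a+A)_\star)=(\phi(a+A)\phi^{-1})_\star$. Here $E^2/\mathrm{M}$ is the square pillow and $E^2/\Delta$ the tetrahedral pillow. *)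

theory Defs
  imports "HOL-Analysis.Analysis" "HOL-Library.FuncSet"
begin

type_synonym pt = "real^2"
type_synonym amap = "pt \<Rightarrow> pt"

text \<open>The affine map a+A : x \<mapsto> a + A x.\<close>
definition aff :: "pt \<Rightarrow> real^2^2 \<Rightarrow> amap" where
  "aff a A = (\<lambda>x. a + A *v x)"

definition e1 :: pt where "e1 = vector [1, 0]"
definition e2 :: pt where "e2 = vector [0, 1]"

text \<open>The affine group of E^2.\<close>
definition affgroup :: "amap set" where
  "affgroup = {aff a A | a A. invertible A}"

text \<open>Subgroup of the affine group generated by a set S of affine maps.\<close>
inductive_set gen :: "amap set \<Rightarrow> amap set" for S where
  gen_id: "id \<in> gen S"
| gen_mult: "g \<in> gen S \<Longrightarrow> s \<in> S \<Longrightarrow> s \<circ> g \<in> gen S"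
| gen_inv: "g \<in> gen S \<Longrightarrow> s \<in> S \<Longrightarrow> inv s \<circ> g \<in> gen S"

text \<open>Affine normalizer N_A(\<Gamma>).\<close>
definition affnorm :: "amap set \<Rightarrow> amap set" where
  "affnorm \<Gamma> = {\<phi> \<in> affgroup. (\<lambda>g. \<phi> \<circ> g \<circ> inv \<phi>) ` \<Gamma> = \<Gamma>}"

text \<open>Orbits; the orbifold E^2/\<Gamma> is the set of orbits.\<close>
definition orbit :: "amap set \<Rightarrow> pt \<Rightarrow> pt set" where
  "orbit \<Gamma> x = (\<lambda>g. g x) ` \<Gamma>"

definition orbits :: "amap set \<Rightarrow> pt set set" where
  "orbits \<Gamma> = range (orbit \<Gamma>)"

text \<open>Induced affinity \<phi>_\<star> : \<Gamma>x \<mapsto> \<Gamma>(\<phi> x), as an extensional map on the orbit set.\<close>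
definition star :: "amap set \<Rightarrow> amap \<Rightarrow> pt set \<Rightarrow> pt set" where
  "star \<Gamma> \<phi> = (\<lambda>Q \<in> orbits \<Gamma>. orbit \<Gamma> (\<phi> (SOME x. x \<in> Q)))"

text \<open>Aff(\<Gamma>).\<close>
definition Aff :: "amap set \<Rightarrow> (pt set \<Rightarrow> pt set) set" where
  "Aff \<Gamma> = star \<Gamma> ` affnorm \<Gamma>"

text \<open>Quotient (orbifold) metric on E^2/\<Gamma>.\<close>
definition orbdist :: "pt set \<Rightarrow> pt set \<Rightarrow> real" where
  "orbdist Q1 Q2 = Inf {dist x y | x y. x \<in> Q1 \<and> y \<in> Q2}"

text \<open>Sym(\<Gamma>): the affinities of E^2/\<Gamma> that are isometries of E^2/\<Gamma>.\<close>
definition Sym :: "amap set \<Rightarrow> (pt set \<Rightarrow> pt set) set" where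
  "Sym \<Gamma> = {f \<in> Aff \<Gamma>. \<forall>Q1 \<in> orbits \<Gamma>. \<forall>Q2 \<in> orbits \<Gamma>.
                 orbdist (f Q1) (f Q2) = orbdist Q1 Q2}"

text \<open>Subgroup generated by a set S of extensional self-maps of a carrier \<Omega>
  (group law: composition restricted to \<Omega>).\<close>
inductive_set gen_on :: "'a set \<Rightarrow> ('a \<Rightarrow> 'a) set \<Rightarrow> ('a \<Rightarrow> 'a) set"
  for \<Omega> S where
  gen_on_id: "(\<lambda>x \<in> \<Omega>. x) \<in> gen_on \<Omega> S"
| gen_on_mult: "g \<in> gen_on \<Omega> S \<Longrightarrow> s \<in> S \<Longrightarrow> compose \<Omega> s g \<in> gen_on \<Omega> S"
| gen_on_inv: "g \<in> gen_on \<Omega> S \<Longrightarrow> s \<in> S \<Longrightarrow>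
     compose \<Omega> (restrict (inv_into \<Omega> s) \<Omega>) g \<in> gen_on \<Omega> S"

text \<open>\<phi>_\<sharp> : Aff(\<Gamma>) \<rightarrow> Aff(\<Delta>), \<phi>_\<sharp>(\<psi>_\<star>) = (\<phi>\<psi>\<phi>^{-1})_\<star>.\<close>
definition sharp :: "amap \<Rightarrow> amap set \<Rightarrow> amap set \<Rightarrow> (pt set \<Rightarrow> pt set) \<Rightarrow> (pt set \<Rightarrow> pt set)" where
  "sharp \<phi> \<Gamma> \<Delta> f = (SOME f'. \<exists>\<psi> \<in> affnorm \<Gamma>. f = star \<Gamma> \<psi> \<and> f' = star \<Delta> (\<phi> \<circ> \<psi> \<circ> inv \<phi>))"

definition Mgrp :: "amap set" where
  "Mgrp = gen {aff e1 (mat 1), aff e2 (mat 1), aff 0 (- mat 1)}"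

definition Deltagrp :: "amap set" where
  "Deltagrp = gen {aff e1 (mat 1), aff (e1 /\<^sub>R 2 + (sqrt 3 / 2) *\<^sub>R e2) (mat 1), aff 0 (- mat 1)}"

definition Kgrp :: "(pt set \<Rightarrow> pt set) set" where
  "Kgrp = gen_on (orbits Mgrp) {star Mgrp (aff (e1 /\<^sub>R 2) (mat 1)), star Mgrp (aff (e2 /\<^sub>R 2) (mat 1))}"

definition matA :: "real^2^2" where "matA = vector [vector [-1, 0], vector [0, 1]]"
definition matB :: "real^2^2" where "matB = vector [vector [-1, 1], vector [0, 1]]"
definition matC :: "real^2^2" where "matC = vector [vector [0, 1], vector [1, 0]]"
definition matD :: "real^2^2" where "matD = vector [vector [1, -1/2], vector [0, sqrt 3 / 2]]"

end

theory Submission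
  imports Defs
begin

lemma aff_apply: "aff a A x = a + A *v x"
  by (simp add: aff_def)

lemma neg_mat_mult_vec[simp]: "(- A) *v x = - (A *v x)" for A :: "real^2^2"
  unfolding matrix_vector_mult_def vec_eq_iff by (simp add: sum_2)

lemma aff_comp: "aff a A \<circ> aff b B = aff (a + A *v b) (A ** B)"
  by (rule ext) (simp add: aff_apply matrix_vector_mul_assoc matrix_vector_right_distrib add.assoc)

lemma aff_eq_iff: "aff a A = aff b B \<longleftrightarrow> a = b \<and> A = B"
proof
  assume h: "aff a A = aff b B"
  have ab: "a = b" using fun_cong[OF h, of 0] by (simp add: aff_apply)
  have "\<forall>x. A *v x = B *v x" using h ab by (metis aff_apply add_left_cancel)
  then show "a = b \<and> A = B" using ab matrix_eq by blast
qed simp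

lemma aff_id: "aff 0 (mat 1) = id"
  by (rule ext) (simp add: aff_apply)

lemma aff_inv_comp:
  assumes "A ** A' = mat 1" "A' ** A = mat 1"
  shows "aff a A \<circ> aff (-(A' *v a)) A' = id" "aff (-(A' *v a)) A' \<circ> aff a A = id"
  using assms by (simp_all add: aff_comp aff_id matrix_vector_mul_assoc vec.neg)

lemma aff_inv:
  assumes "A ** A' = mat 1" "A' ** A = mat 1"
  shows "inv (aff a A) = aff (-(A' *v a)) A'"
  using aff_inv_comp[OF assms] inv_unique_comp by blast

lemma bij_aff:
  assumes "invertible A" shows "bij (aff a A)"
proof -
  obtain A' where "A ** A' = mat 1" "A' ** A = mat 1" using assms invertible_def by blast
  from aff_inv_comp[OF this] show ?thesis using o_bij by blast
qed

lemma inv_aff_affgroup: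
  assumes "invertible A" shows "inv (aff a A) \<in> affgroup"
proof -
  obtain A' where h: "A ** A' = mat 1" "A' ** A = mat 1" using assms invertible_def by blast
  then have "invertible A'" using invertible_def by blast
  then show ?thesis using aff_inv[OF h] affgroup_def by blast
qed

lemma affgroup_bij: "\<phi> \<in> affgroup \<Longrightarrow> bij \<phi>"
  unfolding affgroup_def using bij_aff by auto

lemma affgroup_comp: "\<phi> \<in> affgroup \<Longrightarrow> \<psi> \<in> affgroup \<Longrightarrow> \<phi> \<circ> \<psi> \<in> affgroup"
  unfolding affgroup_def using aff_comp invertible_mult by blast

lemma affgroup_inv: "\<phi> \<in> affgroup \<Longrightarrow> inv \<phi> \<in> affgroup"
  unfolding affgroup_def using inv_aff_affgroup affgroup_def by blast

lemma affgroup_id: "id \<in> affgroup"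
  unfolding affgroup_def using aff_id invertible_def[of "mat 1"]
  by (metis (mono_tags, lifting) matrix_mul_lid mem_Collect_eq)

definition cj :: "amap \<Rightarrow> amap \<Rightarrow> amap" where
  "cj P g = P \<circ> g \<circ> inv P"

lemma cj_cj: "bij P \<Longrightarrow> bij Q \<Longrightarrow> cj P (cj Q g) = cj (P \<circ> Q) g"
  by (simp add: cj_def o_inv_distrib comp_assoc)

lemma cj_inv_cancel: "bij P \<Longrightarrow> cj (inv P) (cj P g) = g"
  by (simp add: cj_def comp_assoc bij_is_inj bij_is_surj inv_inv_eq)
     (simp add: bij_is_inj inv_o_cancel flip: comp_assoc)

definition grp :: "amap set \<Rightarrow> bool" where
  "grp \<Gamma> \<longleftrightarrow> id \<in> \<Gamma> \<and> (\<forall>g\<in>\<Gamma>. \<forall>h\<in>\<Gamma>. g \<circ> h \<in> \<Gamma>) \<and> (\<forall>g\<in>\<Gamma>. bij g \<and> inv g \<in> \<Gamma>)"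

definition isom :: "amap \<Rightarrow> bool" where
  "isom f \<longleftrightarrow> (\<forall>x y. dist (f x) (f y) = dist x y)"

lemma affnorm_alt: "affnorm \<Gamma> = {\<phi> \<in> affgroup. cj \<phi> ` \<Gamma> = \<Gamma>}"
  unfolding affnorm_def cj_def[abs_def] by simp

lemma affnorm_cj: "\<phi> \<in> affnorm \<Gamma> \<Longrightarrow> g \<in> \<Gamma> \<Longrightarrow> cj \<phi> g \<in> \<Gamma>"
  unfolding affnorm_alt by blast

lemma affnorm_bij: "\<phi> \<in> affnorm \<Gamma> \<Longrightarrow> bij \<phi>"
  unfolding affnorm_alt using affgroup_bij by blast

lemma affnorm_comp:
  assumes "\<phi> \<in> affnorm \<Gamma>" "\<psi> \<in> affnorm \<Gamma>" shows "\<phi> \<circ> \<psi> \<in> affnorm \<Gamma>"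
proof -
  have b: "bij \<phi>" "bij \<psi>" using assms affnorm_bij by auto
  have "cj (\<phi> \<circ> \<psi>) ` \<Gamma> = cj \<phi> ` cj \<psi> ` \<Gamma>"
    using cj_cj[OF b] by (simp add: image_image)
  also have "\<dots> = \<Gamma>" using assms unfolding affnorm_alt by simp
  finally show ?thesis using assms affgroup_comp unfolding affnorm_alt by blast
qed

lemma affnorm_inv:
  assumes "\<phi> \<in> affnorm \<Gamma>" shows "inv \<phi> \<in> affnorm \<Gamma>"
proof -
  have b: "bij \<phi>" using assms affnorm_bij by auto
  have "cj (inv \<phi>) ` \<Gamma> = cj (inv \<phi>) ` cj \<phi> ` \<Gamma>" using assms unfolding affnorm_alt by simp
  also have "\<dots> = \<Gamma>" using cj_inv_cancel[OF b] by (simp add: image_image)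
  finally show ?thesis using assms affgroup_inv unfolding affnorm_alt by blast
qed

lemma affnorm_id: "id \<in> affnorm \<Gamma>"
  unfolding affnorm_alt cj_def using affgroup_id by simp

lemma affnorm_cj_inv: "\<phi> \<in> affnorm \<Gamma> \<Longrightarrow> g \<in> \<Gamma> \<Longrightarrow> inv \<phi> \<circ> g \<circ> \<phi> \<in> \<Gamma>"
  using affnorm_cj[OF affnorm_inv] affnorm_bij unfolding cj_def
  by (metis bij_is_inj bij_is_surj inv_inv_eq)

lemma orbit_self: "grp \<Gamma> \<Longrightarrow> x \<in> orbit \<Gamma> x"
  unfolding orbit_def grp_def by (metis id_apply image_eqI)

lemma orbit_g:
  assumes "grp \<Gamma>" "g \<in> \<Gamma>" shows "orbit \<Gamma> (g x) = orbit \<Gamma> x"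
proof
  show "orbit \<Gamma> (g x) \<subseteq> orbit \<Gamma> x"
    using assms unfolding orbit_def grp_def by (auto simp: image_iff) (metis comp_apply)
  show "orbit \<Gamma> x \<subseteq> orbit \<Gamma> (g x)"
  proof
    fix y assume "y \<in> orbit \<Gamma> x"
    then obtain h where h: "h \<in> \<Gamma>" "y = h x" unfolding orbit_def by auto
    have bg: "bij g" "inv g \<in> \<Gamma>" using assms unfolding grp_def by auto
    have "y = (h \<circ> inv g) (g x)" using h bg by (simp add: bij_is_inj)
    moreover have "h \<circ> inv g \<in> \<Gamma>" using assms h bg unfolding grp_def by auto
    ultimately show "y \<in> orbit \<Gamma> (g x)" unfolding orbit_def
      by (metis (no_types, lifting) image_eqI)
  qed
qed

lemma orbit_mem_eq: "grp \<Gamma> \<Longrightarrow> y \<in> orbit \<Gamma> x \<Longrightarrow> orbit \<Gamma> y = orbit \<Gamma> x"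
proof -
  assume a: "grp \<Gamma>" "y \<in> orbit \<Gamma> x"
  then obtain g where "g \<in> \<Gamma>" "y = g x" unfolding orbit_def by auto
  then show ?thesis using orbit_g[OF a(1)] by simp
qed

lemma orbit_image:
  assumes "grp \<Gamma>" "\<phi> \<in> affnorm \<Gamma>" shows "orbit \<Gamma> (\<phi> x) = \<phi> ` orbit \<Gamma> x"
proof
  have b: "bij \<phi>" using assms affnorm_bij by auto
  show "orbit \<Gamma> (\<phi> x) \<subseteq> \<phi> ` orbit \<Gamma> x"
  proof
    fix y assume "y \<in> orbit \<Gamma> (\<phi> x)"
    then obtain g where g: "g \<in> \<Gamma>" "y = g (\<phi> x)" unfolding orbit_def by auto
    have "inv \<phi> \<circ> g \<circ> \<phi> \<in> \<Gamma>" using affnorm_cj_inv assms g by blast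
    moreover have "y = \<phi> ((inv \<phi> \<circ> g \<circ> \<phi>) x)" using g b by (simp add: bij_is_surj surj_f_inv_f)
    ultimately show "y \<in> \<phi> ` orbit \<Gamma> x" unfolding orbit_def
      by (metis (no_types, lifting) image_eqI)
  qed
  show "\<phi> ` orbit \<Gamma> x \<subseteq> orbit \<Gamma> (\<phi> x)"
  proof
    fix y assume "y \<in> \<phi> ` orbit \<Gamma> x"
    then obtain g where g: "g \<in> \<Gamma>" "y = \<phi> (g x)" unfolding orbit_def by auto
    have "cj \<phi> g \<in> \<Gamma>" using affnorm_cj assms g by blast
    moreover have "y = cj \<phi> g (\<phi> x)" using g b by (simp add: cj_def bij_is_inj)
    ultimately show "y \<in> orbit \<Gamma> (\<phi> x)" unfolding orbit_def by auto
  qed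
qed

lemma orbit_image_mem:
  assumes "grp \<Gamma>" "\<phi> \<in> affnorm \<Gamma>" "y \<in> orbit \<Gamma> x"
  shows "orbit \<Gamma> (\<phi> y) = orbit \<Gamma> (\<phi> x)"
  using assms by (simp add: orbit_image orbit_mem_eq)

lemma orbits_orbit: "orbit \<Gamma> x \<in> orbits \<Gamma>"
  unfolding orbits_def by simp

lemma star_orbit_gen:
  assumes "grp \<Gamma>" "\<And>y. y \<in> orbit \<Gamma> x \<Longrightarrow> orbit \<Gamma> (\<phi> y) = orbit \<Gamma> (\<phi> x)"
  shows "star \<Gamma> \<phi> (orbit \<Gamma> x) = orbit \<Gamma> (\<phi> x)"
proof -
  have "(SOME y. y \<in> orbit \<Gamma> x) \<in> orbit \<Gamma> x" using orbit_self[OF assms(1)] by (rule someI)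
  then show ?thesis using assms(2) unfolding star_def by (simp add: orbits_orbit)
qed

lemma star_orbit:
  assumes "grp \<Gamma>" "\<phi> \<in> affnorm \<Gamma>" shows "star \<Gamma> \<phi> (orbit \<Gamma> x) = orbit \<Gamma> (\<phi> x)"
  using assms by (intro star_orbit_gen) (auto simp: orbit_image orbit_mem_eq)

lemma star_ext: "f \<in> extensional (orbits \<Gamma>) \<Longrightarrow> star \<Gamma> \<phi> = f \<longleftrightarrow> (\<forall>x. star \<Gamma> \<phi> (orbit \<Gamma> x) = f (orbit \<Gamma> x))"
  unfolding star_def orbits_def
  by (auto intro!: extensionalityI[where A="range (orbit \<Gamma>)"])

lemma star_eqI:
  assumes "\<And>x. star \<Gamma> \<phi> (orbit \<Gamma> x) = star \<Gamma> \<psi> (orbit \<Gamma> x)" shows "star \<Gamma> \<phi> = star \<Gamma> \<psi>"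
  using assms star_ext[of "star \<Gamma> \<psi>" \<Gamma> \<phi>] unfolding star_def by auto

lemma star_comp:
  assumes "grp \<Gamma>" "\<phi> \<in> affnorm \<Gamma>" "\<psi> \<in> affnorm \<Gamma>"
  shows "star \<Gamma> (\<phi> \<circ> \<psi>) = compose (orbits \<Gamma>) (star \<Gamma> \<phi>) (star \<Gamma> \<psi>)"
proof -
  have "compose (orbits \<Gamma>) (star \<Gamma> \<phi>) (star \<Gamma> \<psi>) \<in> extensional (orbits \<Gamma>)"
    by (simp add: compose_def)
  moreover have "\<forall>x. star \<Gamma> (\<phi> \<circ> \<psi>) (orbit \<Gamma> x) = compose (orbits \<Gamma>) (star \<Gamma> \<phi>) (star \<Gamma> \<psi>) (orbit \<Gamma> x)"
    using assms affnorm_comp by (simp add: star_orbit compose_def orbits_orbit)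
  ultimately show ?thesis using star_ext by blast
qed

lemma star_id:
  assumes "grp \<Gamma>" shows "star \<Gamma> id = (\<lambda>Q\<in>orbits \<Gamma>. Q)"
  using star_ext[of "(\<lambda>Q\<in>orbits \<Gamma>. Q)" \<Gamma> id] star_orbit[OF assms affnorm_id]
  by (simp add: orbits_orbit)

lemma star_in: "Q \<in> orbits \<Gamma> \<Longrightarrow> star \<Gamma> \<phi> Q \<in> orbits \<Gamma>"
  unfolding star_def by (simp add: orbits_orbit)

lemma star_inv:
  assumes "grp \<Gamma>" "\<phi> \<in> affnorm \<Gamma>"
  shows "restrict (inv_into (orbits \<Gamma>) (star \<Gamma> \<phi>)) (orbits \<Gamma>) = star \<Gamma> (inv \<phi>)"
proof -
  have b: "bij \<phi>" using assms affnorm_bij by auto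
  have i: "inv \<phi> \<in> affnorm \<Gamma>" using assms affnorm_inv by auto
  have c1: "star \<Gamma> \<phi> (star \<Gamma> (inv \<phi>) Q) = Q" if "Q \<in> orbits \<Gamma>" for Q
    using that assms i b unfolding orbits_def
    by (auto simp: star_orbit bij_is_surj surj_f_inv_f)
  have c2: "star \<Gamma> (inv \<phi>) (star \<Gamma> \<phi> Q) = Q" if "Q \<in> orbits \<Gamma>" for Q
    using that assms i b unfolding orbits_def
    by (auto simp: star_orbit bij_is_inj)
  have inj: "inj_on (star \<Gamma> \<phi>) (orbits \<Gamma>)"
    by (metis c2 inj_onI)
  show ?thesis
  proof (rule ext)
    fix Q show "restrict (inv_into (orbits \<Gamma>) (star \<Gamma> \<phi>)) (orbits \<Gamma>) Q = star \<Gamma> (inv \<phi>) Q"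
    proof (cases "Q \<in> orbits \<Gamma>")
      case True
      then show ?thesis using inv_into_f_eq[OF inj star_in c1] by simp
    next
      case False
      then show ?thesis unfolding star_def by simp
    qed
  qed
qed

lemma star_right:
  assumes "grp \<Gamma>" "\<phi> \<in> affnorm \<Gamma>" "g \<in> \<Gamma>" shows "star \<Gamma> (\<phi> \<circ> g) = star \<Gamma> \<phi>"
proof (rule star_eqI)
  fix x
  have "star \<Gamma> (\<phi> \<circ> g) (orbit \<Gamma> x) = orbit \<Gamma> ((\<phi> \<circ> g) x)"
  proof (rule star_orbit_gen[OF assms(1)])
    fix y assume "y \<in> orbit \<Gamma> x"
    then have "g y \<in> orbit \<Gamma> (g x)"
      using orbit_self[OF assms(1), of "g y"] orbit_g[OF assms(1,3)] orbit_mem_eq[OF assms(1)] by simp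
    then show "orbit \<Gamma> ((\<phi> \<circ> g) y) = orbit \<Gamma> ((\<phi> \<circ> g) x)"
      using assms orbit_image_mem by simp
  qed
  then show "star \<Gamma> (\<phi> \<circ> g) (orbit \<Gamma> x) = star \<Gamma> \<phi> (orbit \<Gamma> x)"
    using assms by (simp add: star_orbit orbit_image orbit_g)
qed

lemma star_left:
  assumes "grp \<Gamma>" "\<phi> \<in> affnorm \<Gamma>" "g \<in> \<Gamma>" shows "star \<Gamma> (g \<circ> \<phi>) = star \<Gamma> \<phi>"
proof (rule star_eqI)
  fix x
  have "star \<Gamma> (g \<circ> \<phi>) (orbit \<Gamma> x) = orbit \<Gamma> ((g \<circ> \<phi>) x)"
  proof (rule star_orbit_gen[OF assms(1)])
    fix y assume "y \<in> orbit \<Gamma> x"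
    then show "orbit \<Gamma> ((g \<circ> \<phi>) y) = orbit \<Gamma> ((g \<circ> \<phi>) x)"
      using assms orbit_image_mem orbit_g by simp
  qed
  then show "star \<Gamma> (g \<circ> \<phi>) (orbit \<Gamma> x) = star \<Gamma> \<phi> (orbit \<Gamma> x)"
    using assms by (simp add: star_orbit orbit_g)
qed

lemma orbdist_star:
  assumes "grp \<Gamma>" "\<phi> \<in> affnorm \<Gamma>" "isom \<phi>" "Q1 \<in> orbits \<Gamma>" "Q2 \<in> orbits \<Gamma>"
  shows "orbdist (star \<Gamma> \<phi> Q1) (star \<Gamma> \<phi> Q2) = orbdist Q1 Q2"
proof -
  obtain x y where q: "Q1 = orbit \<Gamma> x" "Q2 = orbit \<Gamma> y" using assms unfolding orbits_def by auto
  have "{dist u w |u w. u \<in> \<phi> ` Q1 \<and> w \<in> \<phi> ` Q2} = {dist u w |u w. u \<in> Q1 \<and> w \<in> Q2}"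
  proof (rule set_eqI, rule iffI)
    fix d assume "d \<in> {dist u w |u w. u \<in> \<phi> ` Q1 \<and> w \<in> \<phi> ` Q2}"
    then obtain a b where "a \<in> Q1" "b \<in> Q2" "d = dist (\<phi> a) (\<phi> b)" by blast
    then show "d \<in> {dist u w |u w. u \<in> Q1 \<and> w \<in> Q2}" using assms(3) unfolding isom_def by auto
  next
    fix d assume "d \<in> {dist u w |u w. u \<in> Q1 \<and> w \<in> Q2}"
    then obtain a b where "a \<in> Q1" "b \<in> Q2" "d = dist a b" by blast
    then have "a \<in> Q1 \<and> b \<in> Q2 \<and> d = dist (\<phi> a) (\<phi> b)" using assms(3) unfolding isom_def by auto
    then show "d \<in> {dist u w |u w. u \<in> \<phi> ` Q1 \<and> w \<in> \<phi> ` Q2}" by blast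
  qed
  then show ?thesis using assms q by (simp add: star_orbit orbit_image orbdist_def)
qed

definition lat :: "pt set \<Rightarrow> bool" where
  "lat L \<longleftrightarrow> 0 \<in> L \<and> (\<forall>x\<in>L. \<forall>y\<in>L. x + y \<in> L) \<and> (\<forall>x\<in>L. -x \<in> L)"

definition Gam :: "pt set \<Rightarrow> amap set" where
  "Gam L = {aff n (mat 1) | n. n \<in> L} \<union> {aff n (- mat 1) | n. n \<in> L}"

definition LatUV :: "pt \<Rightarrow> pt \<Rightarrow> pt set" where
  "LatUV u v = {of_int i *\<^sub>R u + of_int j *\<^sub>R v | i j. True}"

lemma lat_add: "lat L \<Longrightarrow> x \<in> L \<Longrightarrow> y \<in> L \<Longrightarrow> x + y \<in> L" unfolding lat_def by blast
lemma lat_neg: "lat L \<Longrightarrow> x \<in> L \<Longrightarrow> -x \<in> L" unfolding lat_def by blast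
lemma lat_zero: "lat L \<Longrightarrow> 0 \<in> L" unfolding lat_def by blast
lemma lat_diff: "lat L \<Longrightarrow> x \<in> L \<Longrightarrow> y \<in> L \<Longrightarrow> x - y \<in> L"
  using lat_add lat_neg by (metis diff_conv_add_uminus)

lemma lat_LatUV: "lat (LatUV u v)"
  unfolding lat_def LatUV_def
proof (intro conjI ballI)
  show "0 \<in> {of_int i *\<^sub>R u + of_int j *\<^sub>R v |i j. True}"
    by (rule CollectI, rule exI[of _ 0], rule exI[of _ 0]) simp
next
  fix x y assume "x \<in> {of_int i *\<^sub>R u + of_int j *\<^sub>R v |i j. True}" "y \<in> {of_int i *\<^sub>R u + of_int j *\<^sub>R v |i j. True}"
  then obtain i j k l where "x = of_int i *\<^sub>R u + of_int j *\<^sub>R v" "y = of_int k *\<^sub>R u + of_int l *\<^sub>R v" by blast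
  then have "x + y = of_int (i + k) *\<^sub>R u + of_int (j + l) *\<^sub>R v" by (simp add: algebra_simps)
  then show "x + y \<in> {of_int i *\<^sub>R u + of_int j *\<^sub>R v |i j. True}" by blast
next
  fix x assume "x \<in> {of_int i *\<^sub>R u + of_int j *\<^sub>R v |i j. True}"
  then obtain i j where "x = of_int i *\<^sub>R u + of_int j *\<^sub>R v" by blast
  then have "-x = of_int (-i) *\<^sub>R u + of_int (-j) *\<^sub>R v" by (simp add: algebra_simps)
  then show "-x \<in> {of_int i *\<^sub>R u + of_int j *\<^sub>R v |i j. True}" by blast
qed

lemma mat_neg_mult_left[simp]: "(- A) ** B = - (A ** B)" for A B :: "real^2^2"
  by (simp add: vec_eq_iff matrix_matrix_mult_def sum_2)
lemma mat_neg_mult_right[simp]: "A ** (- B) = - (A ** B)" for A B :: "real^2^2"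
  by (simp add: vec_eq_iff matrix_matrix_mult_def sum_2)

lemma mat1_neq_neg: "mat 1 \<noteq> (- mat 1 :: real^2^2)"
proof
  assume "mat 1 = (- mat 1 :: real^2^2)"
  then have "(mat 1 :: real^2^2) $ 1 $ 1 = (- mat 1 :: real^2^2) $ 1 $ 1" by (rule arg_cong)
  then show False unfolding vector_uminus_component mat_def by simp
qed

lemma inv_tr: "inv (aff n (mat 1)) = aff (-n) (mat 1)"
  using aff_inv[of "mat 1" "mat 1" n] by simp

lemma inv_ptr: "inv (aff n (- mat 1)) = aff n (- mat 1)"
  using aff_inv[of "- mat 1" "- mat 1" n] by simp

lemma invertible_pm: "invertible (mat 1 :: real^2^2)" "invertible (- mat 1 :: real^2^2)"
  unfolding invertible_def by (rule exI[of _ "mat 1"], simp) (rule exI[of _ "- mat 1"], simp)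

lemma grp_Gam: assumes "lat L" shows "grp (Gam L)"
  unfolding grp_def
proof (intro conjI ballI)
  show "id \<in> Gam L" unfolding Gam_def using lat_zero[OF assms] aff_id by (metis (mono_tags, lifting) UnCI mem_Collect_eq)
next
  fix g h assume "g \<in> Gam L" "h \<in> Gam L"
  then show "g \<circ> h \<in> Gam L" unfolding Gam_def using assms
    by (auto simp: aff_comp lat_add lat_diff)
next
  fix g assume "g \<in> Gam L"
  then show "bij g" unfolding Gam_def using bij_aff invertible_pm by auto
next
  fix g assume "g \<in> Gam L"
  then show "inv g \<in> Gam L" unfolding Gam_def using assms
    by (auto simp: inv_tr inv_ptr lat_neg)
qed

lemma gen_sub_grp: assumes "grp G" "S \<subseteq> G" shows "gen S \<subseteq> G"
proof
  fix g assume "g \<in> gen S" then show "g \<in> G"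
  proof induct
    case gen_id then show ?case using assms unfolding grp_def by blast
  next
    case (gen_mult g s) then show ?case using assms unfolding grp_def by blast
  next
    case (gen_inv g s) then show ?case using assms unfolding grp_def by blast
  qed
qed

lemma gen_comp: "g \<in> gen S \<Longrightarrow> h \<in> gen S \<Longrightarrow> g \<circ> h \<in> gen S"
proof (induct g rule: gen.induct)
  case gen_id then show ?case by (metis id_comp)
next
  case (gen_mult g s) then show ?case by (metis comp_assoc gen.gen_mult)
next
  case (gen_inv g s) then show ?case by (metis comp_assoc gen.gen_inv)
qed

lemma gen_Gam: "gen {aff u (mat 1), aff v (mat 1), aff 0 (- mat 1)} = Gam (LatUV u v)"
  (is "gen ?S = _")
proof
  have l: "lat (LatUV u v)" by (rule lat_LatUV)
  have uv: "u \<in> LatUV u v" "v \<in> LatUV u v" unfolding LatUV_def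
    by (rule CollectI, rule exI[of _ 1], rule exI[of _ 0], simp)
       (rule CollectI, rule exI[of _ 0], rule exI[of _ 1], simp)
  show "gen ?S \<subseteq> Gam (LatUV u v)"
    by (rule gen_sub_grp[OF grp_Gam[OF l]]) (use uv lat_zero[OF l] in \<open>auto simp: Gam_def\<close>)
  have mult: "aff (of_int i *\<^sub>R w) (mat 1) \<in> gen ?S" if w: "w \<in> {u, v}" for w i
  proof -
    have nat: "aff (of_nat k *\<^sub>R w) (mat 1) \<in> gen ?S \<and> aff (- (of_nat k *\<^sub>R w)) (mat 1) \<in> gen ?S" for k
    proof (induct k)
      case 0
      have "aff (of_nat 0 *\<^sub>R w) (mat 1) = id" "aff (- (of_nat 0 *\<^sub>R w)) (mat 1) = id"
        using aff_id by simp_all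
      then show ?case by (simp only:) (rule conjI; rule gen.gen_id)
    next
      case (Suc k)
      have ws: "aff w (mat 1) \<in> ?S" using w by auto
      have "aff w (mat 1) \<circ> aff (of_nat k *\<^sub>R w) (mat 1) \<in> gen ?S"
        using Suc gen.gen_mult ws by blast
      moreover have "inv (aff w (mat 1)) \<circ> aff (- (of_nat k *\<^sub>R w)) (mat 1) \<in> gen ?S"
        using Suc gen.gen_inv ws by blast
      ultimately show ?case by (simp add: aff_comp inv_tr algebra_simps)
    qed
    show ?thesis
    proof (cases "i \<ge> 0")
      case True then obtain k where "i = int k" by (metis nonneg_eq_int)
      then show ?thesis using nat[of k] by simp
    next
      case False then obtain k where "i = - int k" by (metis nonpos_int_cases linear)
      then show ?thesis using nat[of k] by simp
    qed
  qed
  have tr: "aff n (mat 1) \<in> gen ?S" if nL: "n \<in> LatUV u v" for n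
  proof -
    obtain i j where n: "n = of_int i *\<^sub>R u + of_int j *\<^sub>R v" using nL unfolding LatUV_def by blast
    have "aff (of_int i *\<^sub>R u) (mat 1) \<circ> aff (of_int j *\<^sub>R v) (mat 1) \<in> gen ?S"
      using mult gen_comp by blast
    then show ?thesis using n by (simp add: aff_comp)
  qed
  show "Gam (LatUV u v) \<subseteq> gen ?S"
  proof
    fix g assume "g \<in> Gam (LatUV u v)"
    then consider n where "n \<in> LatUV u v" "g = aff n (mat 1)" | n where "n \<in> LatUV u v" "g = aff n (- mat 1)"
      unfolding Gam_def by blast
    then show "g \<in> gen ?S"
    proof cases
      case 1 then show ?thesis using tr by simp
    next
      case 2
      have "aff 0 (- mat 1) \<circ> aff (-n) (mat 1) \<in> gen ?S"
        using gen.gen_mult tr[OF lat_neg[OF l 2(1)]] by blast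
      then show ?thesis using 2 by (simp add: aff_comp)
    qed
  qed
qed

lemma mat_inv_vec: "A ** A' = mat 1 \<Longrightarrow> A *v (A' *v x) = x"
  by (simp add: matrix_vector_mul_assoc)

lemma cj_aff_tr:
  assumes "A ** A' = mat 1" "A' ** A = mat 1"
  shows "cj (aff a A) (aff n (mat 1)) = aff (A *v n) (mat 1)"
  unfolding cj_def aff_inv[OF assms] aff_comp using assms
  by (simp add: matrix_vector_right_distrib vec.neg mat_inv_vec)

lemma cj_aff_ptr:
  assumes "A ** A' = mat 1" "A' ** A = mat 1"
  shows "cj (aff a A) (aff n (- mat 1)) = aff (2 *\<^sub>R a + A *v n) (- mat 1)"
  unfolding cj_def aff_inv[OF assms] aff_comp using assms
  by (simp add: matrix_vector_right_distrib vec.neg mat_inv_vec scaleR_2)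

lemma Gam_tr: "aff m (mat 1) \<in> Gam L \<longleftrightarrow> m \<in> L"
proof
  assume "aff m (mat 1) \<in> Gam L"
  then consider n where "n \<in> L" "aff m (mat 1) = aff n (mat 1)" | n where "n \<in> L" "aff m (mat 1) = aff n (- mat 1)"
    unfolding Gam_def by blast
  then show "m \<in> L"
  proof cases
    case 1 then show ?thesis unfolding aff_eq_iff by simp
  next
    case 2 then show ?thesis unfolding aff_eq_iff using mat1_neq_neg by simp
  qed
qed (auto simp: Gam_def)

lemma Gam_ptr: "aff m (- mat 1) \<in> Gam L \<longleftrightarrow> m \<in> L"
proof
  assume "aff m (- mat 1) \<in> Gam L"
  then consider n where "n \<in> L" "aff m (- mat 1) = aff n (mat 1)" | n where "n \<in> L" "aff m (- mat 1) = aff n (- mat 1)"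
    unfolding Gam_def by blast
  then show "m \<in> L"
  proof cases
    case 1 then show ?thesis unfolding aff_eq_iff using mat1_neq_neg by metis
  next
    case 2 then show ?thesis unfolding aff_eq_iff by simp
  qed
qed (auto simp: Gam_def)

lemma affnorm_Gam_dest:
  assumes l: "lat L" and "\<phi> \<in> affnorm (Gam L)"
  obtains a A where "\<phi> = aff a A" "invertible A" "\<And>n. n \<in> L \<Longrightarrow> A *v n \<in> L" "2 *\<^sub>R a \<in> L"
proof -
  obtain a A where phi: "\<phi> = aff a A" "invertible A" using assms unfolding affnorm_def affgroup_def by blast
  obtain A' where i: "A ** A' = mat 1" "A' ** A = mat 1" using phi invertible_def by blast
  have "A *v n \<in> L" if n: "n \<in> L" for n
  proof -
    have "aff n (mat 1) \<in> Gam L" using n Gam_tr by blast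
    then have "cj \<phi> (aff n (mat 1)) \<in> Gam L" using affnorm_cj[OF assms(2)] by blast
    then have "aff (A *v n) (mat 1) \<in> Gam L" using cj_aff_tr[OF i] phi(1) by simp
    then show ?thesis using Gam_tr by blast
  qed
  moreover have "2 *\<^sub>R a \<in> L"
  proof -
    have "aff 0 (- mat 1) \<in> Gam L" using lat_zero[OF l] Gam_ptr by blast
    then have "cj \<phi> (aff 0 (- mat 1)) \<in> Gam L" using affnorm_cj[OF assms(2)] by blast
    then have "aff (2 *\<^sub>R a + A *v 0) (- mat 1) \<in> Gam L" using cj_aff_ptr[OF i] phi(1) by simp
    then show ?thesis using Gam_ptr by simp
  qed
  ultimately show ?thesis using that phi by blast
qed

lemma affnorm_Gam_intro:
  assumes l: "lat L" and i: "A ** A' = mat 1" "A' ** A = mat 1"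
    and AL: "\<And>n. n \<in> L \<Longrightarrow> A *v n \<in> L" and AL': "\<And>n. n \<in> L \<Longrightarrow> A' *v n \<in> L"
    and a: "2 *\<^sub>R a \<in> L"
  shows "aff a A \<in> affnorm (Gam L)"
proof -
  have inv: "invertible A" using i invertible_def by blast
  have "cj (aff a A) ` Gam L = Gam L"
  proof
    show "cj (aff a A) ` Gam L \<subseteq> Gam L"
    proof
      fix h assume "h \<in> cj (aff a A) ` Gam L"
      then obtain g where g: "g \<in> Gam L" "h = cj (aff a A) g" by blast
      then consider m where "m \<in> L" "g = aff m (mat 1)" | m where "m \<in> L" "g = aff m (- mat 1)"
        unfolding Gam_def by blast
      then show "h \<in> Gam L"
      proof cases
        case 1 then show ?thesis using g cj_aff_tr[OF i] Gam_tr AL by simp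
      next
        case 2 then show ?thesis using g cj_aff_ptr[OF i] Gam_ptr AL a l lat_add by simp
      qed
    qed
    show "Gam L \<subseteq> cj (aff a A) ` Gam L"
    proof
      fix g assume "g \<in> Gam L"
      then consider m where "m \<in> L" "g = aff m (mat 1)" | m where "m \<in> L" "g = aff m (- mat 1)"
        unfolding Gam_def by blast
      then show "g \<in> cj (aff a A) ` Gam L"
      proof cases
        case 1
        have "g = cj (aff a A) (aff (A' *v m) (mat 1))" using 1 cj_aff_tr[OF i] mat_inv_vec[OF i(1)] by simp
        moreover have "aff (A' *v m) (mat 1) \<in> Gam L" using 1 AL' Gam_tr by blast
        ultimately show ?thesis by blast
      next
        case 2
        have "g = cj (aff a A) (aff (A' *v (m - 2 *\<^sub>R a)) (- mat 1))" using 2 cj_aff_ptr[OF i] mat_inv_vec[OF i(1)] by simp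
        moreover have "aff (A' *v (m - 2 *\<^sub>R a)) (- mat 1) \<in> Gam L" using 2 AL' Gam_ptr lat_diff l a by blast
        ultimately show ?thesis by blast
      qed
    qed
  qed
  then show ?thesis unfolding affnorm_alt affgroup_def using inv by blast
qed

lemma cj_bij: "bij P \<Longrightarrow> bij g \<Longrightarrow> bij (cj P g)"
  unfolding cj_def by (intro bij_comp bij_imp_bij_inv) auto

lemma cj_affgroup: "P \<in> affgroup \<Longrightarrow> g \<in> affgroup \<Longrightarrow> cj P g \<in> affgroup"
  unfolding cj_def by (intro affgroup_comp affgroup_inv) auto

lemma cj_comp: "bij P \<Longrightarrow> cj P (g \<circ> h) = cj P g \<circ> cj P h"
  unfolding cj_def by (simp add: comp_assoc bij_is_inj inv_o_cancel) (simp add: comp_assoc[symmetric] bij_is_inj inv_o_cancel)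

lemma cj_id: "bij P \<Longrightarrow> cj P id = id"
proof -
  assume "bij P"
  then have "P \<circ> inv P = id" using bij_is_surj surj_iff by blast
  then show ?thesis unfolding cj_def by simp
qed

lemma cj_cancel2: "bij P \<Longrightarrow> cj P (cj (inv P) g) = g"
  using cj_inv_cancel[of "inv P" g] by (simp add: bij_imp_bij_inv inv_inv_eq)

lemma affnorm_cj_transport:
  assumes P: "P \<in> affgroup" and G': "\<Gamma>' = cj P ` \<Gamma>" and psi: "\<psi> \<in> affnorm \<Gamma>"
  shows "cj P \<psi> \<in> affnorm \<Gamma>'"
proof -
  have bP: "bij P" using P affgroup_bij by auto
  have bpsi: "bij \<psi>" using psi affnorm_bij by auto
  have bX: "bij (cj P \<psi>)" using cj_bij bP bpsi by auto
  have X: "cj P \<psi> \<circ> P = P \<circ> \<psi>"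
    unfolding cj_def using bP by (simp add: comp_assoc bij_is_inj inv_o_cancel)
  have key: "cj (cj P \<psi>) (cj P g) = cj P (cj \<psi> g)" for g
    using cj_cj[OF bX bP, of g] cj_cj[OF bP bpsi, of g] X by simp
  have "cj (cj P \<psi>) ` \<Gamma>' = cj P ` cj \<psi> ` \<Gamma>"
    unfolding G' image_image key by simp
  also have "\<dots> = \<Gamma>'" using psi G' unfolding affnorm_alt by simp
  finally show ?thesis unfolding affnorm_alt
    using cj_affgroup P psi unfolding affnorm_alt by blast
qed

lemma orbit_transport:
  assumes bP: "bij P" and G': "\<Gamma>' = cj P ` \<Gamma>"
  shows "orbit \<Gamma>' (P x) = P ` orbit \<Gamma> x"
  unfolding orbit_def G' image_image cj_def using bP by (simp add: bij_is_inj image_comp)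

lemma star_transport:
  assumes P: "P \<in> affgroup" and G': "\<Gamma>' = cj P ` \<Gamma>" and g: "grp \<Gamma>" "grp \<Gamma>'"
    and psi: "\<psi> \<in> affnorm \<Gamma>"
  shows "star \<Gamma>' (cj P \<psi>) (orbit \<Gamma>' (P x)) = P ` star \<Gamma> \<psi> (orbit \<Gamma> x)"
proof -
  have bP: "bij P" using P affgroup_bij by auto
  have "cj P \<psi> (P x) = P (\<psi> x)" unfolding cj_def using bP by (simp add: bij_is_inj)
  then have "star \<Gamma>' (cj P \<psi>) (orbit \<Gamma>' (P x)) = orbit \<Gamma>' (P (\<psi> x))"
    using star_orbit[OF g(2) affnorm_cj_transport[OF P G' psi]] by simp
  also have "\<dots> = P ` orbit \<Gamma> (\<psi> x)" using orbit_transport[OF bP G'] by simp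
  also have "\<dots> = P ` star \<Gamma> \<psi> (orbit \<Gamma> x)" using star_orbit[OF g(1) psi] by simp
  finally show ?thesis .
qed

lemma orbits_transport:
  assumes bP: "bij P" and G': "\<Gamma>' = cj P ` \<Gamma>" and Q: "Q \<in> orbits \<Gamma>'"
  obtains x where "Q = orbit \<Gamma>' (P x)"
proof -
  obtain y where "Q = orbit \<Gamma>' y" using Q unfolding orbits_def by auto
  moreover have "y = P (inv P y)" using bP by (simp add: bij_is_surj surj_f_inv_f)
  ultimately show ?thesis using that by metis
qed

lemma star_wd:
  assumes P: "P \<in> affgroup" and G': "\<Gamma>' = cj P ` \<Gamma>" and g: "grp \<Gamma>" "grp \<Gamma>'"
    and psi: "\<psi>1 \<in> affnorm \<Gamma>" "\<psi>2 \<in> affnorm \<Gamma>"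
  shows "star \<Gamma> \<psi>1 = star \<Gamma> \<psi>2 \<longleftrightarrow> star \<Gamma>' (cj P \<psi>1) = star \<Gamma>' (cj P \<psi>2)"
proof
  have bP: "bij P" using P affgroup_bij by auto
  {
    assume h: "star \<Gamma> \<psi>1 = star \<Gamma> \<psi>2"
    show "star \<Gamma>' (cj P \<psi>1) = star \<Gamma>' (cj P \<psi>2)"
    proof (rule star_eqI)
      fix y
      obtain x where "orbit \<Gamma>' y = orbit \<Gamma>' (P x)" using orbits_transport[OF bP G' orbits_orbit] by blast
      then show "star \<Gamma>' (cj P \<psi>1) (orbit \<Gamma>' y) = star \<Gamma>' (cj P \<psi>2) (orbit \<Gamma>' y)"
        using star_transport[OF P G' g psi(1)] star_transport[OF P G' g psi(2)] h by simp
    qed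
  }
  {
    assume h: "star \<Gamma>' (cj P \<psi>1) = star \<Gamma>' (cj P \<psi>2)"
    show "star \<Gamma> \<psi>1 = star \<Gamma> \<psi>2"
    proof (rule star_eqI)
      fix x
      have "P ` star \<Gamma> \<psi>1 (orbit \<Gamma> x) = P ` star \<Gamma> \<psi>2 (orbit \<Gamma> x)"
        using star_transport[OF P G' g psi(1)] star_transport[OF P G' g psi(2)] h by metis
      then show "star \<Gamma> \<psi>1 (orbit \<Gamma> x) = star \<Gamma> \<psi>2 (orbit \<Gamma> x)"
        using bP by (simp add: bij_is_inj inj_image_eq_iff)
    qed
  }
qed

lemma sharp_star:
  assumes P: "P \<in> affgroup" and G': "\<Gamma>' = cj P ` \<Gamma>" and g: "grp \<Gamma>" "grp \<Gamma>'"
    and psi: "\<psi> \<in> affnorm \<Gamma>"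
  shows "sharp P \<Gamma> \<Gamma>' (star \<Gamma> \<psi>) = star \<Gamma>' (cj P \<psi>)"
proof -
  define Pr where "Pr = (\<lambda>f'. \<exists>\<psi>'\<in>affnorm \<Gamma>. star \<Gamma> \<psi> = star \<Gamma> \<psi>' \<and> f' = star \<Gamma>' (P \<circ> \<psi>' \<circ> inv P))"
  have ex: "Pr (star \<Gamma>' (cj P \<psi>))" using psi unfolding Pr_def cj_def by blast
  have un: "f' = star \<Gamma>' (cj P \<psi>)" if pf: "Pr f'" for f'
  proof -
    obtain \<psi>' where "\<psi>' \<in> affnorm \<Gamma>" "star \<Gamma> \<psi> = star \<Gamma> \<psi>'" "f' = star \<Gamma>' (cj P \<psi>')"
      using pf unfolding Pr_def cj_def by blast
    then show ?thesis using star_wd[OF P G' g psi] by metis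
  qed
  have "sharp P \<Gamma> \<Gamma>' (star \<Gamma> \<psi>) = (SOME f'. Pr f')" unfolding sharp_def Pr_def by simp
  also have "\<dots> = star \<Gamma>' (cj P \<psi>)" using someI[of Pr, OF ex] un by blast
  finally show ?thesis .
qed

lemma inv_transport: "bij P \<Longrightarrow> \<Gamma>' = cj P ` \<Gamma> \<Longrightarrow> \<Gamma> = cj (inv P) ` \<Gamma>'"
  by (simp add: image_image cj_inv_cancel)

lemma sharp_props:
  assumes P: "P \<in> affgroup" and G': "\<Gamma>' = cj P ` \<Gamma>" and g: "grp \<Gamma>" "grp \<Gamma>'"
  shows "bij_betw (sharp P \<Gamma> \<Gamma>') (Aff \<Gamma>) (Aff \<Gamma>')"
    "\<forall>f \<in> Aff \<Gamma>. \<forall>h \<in> Aff \<Gamma>. sharp P \<Gamma> \<Gamma>' (compose (orbits \<Gamma>) f h)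
         = compose (orbits \<Gamma>') (sharp P \<Gamma> \<Gamma>' f) (sharp P \<Gamma> \<Gamma>' h)"
proof -
  have bP: "bij P" using P affgroup_bij by auto
  have iP: "inv P \<in> affgroup" using P affgroup_inv by auto
  have G: "\<Gamma> = cj (inv P) ` \<Gamma>'" using inv_transport[OF bP G'] .
  show "bij_betw (sharp P \<Gamma> \<Gamma>') (Aff \<Gamma>) (Aff \<Gamma>')"
    unfolding bij_betw_def
  proof
    show "inj_on (sharp P \<Gamma> \<Gamma>') (Aff \<Gamma>)"
    proof (rule inj_onI)
      fix f h assume "f \<in> Aff \<Gamma>" "h \<in> Aff \<Gamma>" and e: "sharp P \<Gamma> \<Gamma>' f = sharp P \<Gamma> \<Gamma>' h"
      then obtain \<psi>1 \<psi>2 where p: "\<psi>1 \<in> affnorm \<Gamma>" "\<psi>2 \<in> affnorm \<Gamma>" "f = star \<Gamma> \<psi>1" "h = star \<Gamma> \<psi>2"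
        unfolding Aff_def by blast
      then show "f = h" using e sharp_star[OF P G' g] star_wd[OF P G' g p(1,2)] by simp
    qed
    show "sharp P \<Gamma> \<Gamma>' ` Aff \<Gamma> = Aff \<Gamma>'"
    proof
      show "sharp P \<Gamma> \<Gamma>' ` Aff \<Gamma> \<subseteq> Aff \<Gamma>'"
        unfolding Aff_def using sharp_star[OF P G' g] affnorm_cj_transport[OF P G'] by auto
      show "Aff \<Gamma>' \<subseteq> sharp P \<Gamma> \<Gamma>' ` Aff \<Gamma>"
      proof
        fix f assume "f \<in> Aff \<Gamma>'"
        then obtain \<phi> where ph: "\<phi> \<in> affnorm \<Gamma>'" "f = star \<Gamma>' \<phi>" unfolding Aff_def by blast
        have psi: "cj (inv P) \<phi> \<in> affnorm \<Gamma>" using affnorm_cj_transport[OF iP G ph(1)] .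
        have "sharp P \<Gamma> \<Gamma>' (star \<Gamma> (cj (inv P) \<phi>)) = f"
          using sharp_star[OF P G' g psi] cj_cancel2[OF bP] ph by simp
        then show "f \<in> sharp P \<Gamma> \<Gamma>' ` Aff \<Gamma>" using psi unfolding Aff_def by blast
      qed
    qed
  qed
  show "\<forall>f \<in> Aff \<Gamma>. \<forall>h \<in> Aff \<Gamma>. sharp P \<Gamma> \<Gamma>' (compose (orbits \<Gamma>) f h)
         = compose (orbits \<Gamma>') (sharp P \<Gamma> \<Gamma>' f) (sharp P \<Gamma> \<Gamma>' h)"
  proof (intro ballI)
    fix f h assume "f \<in> Aff \<Gamma>" "h \<in> Aff \<Gamma>"
    then obtain \<psi>1 \<psi>2 where p: "\<psi>1 \<in> affnorm \<Gamma>" "\<psi>2 \<in> affnorm \<Gamma>" "f = star \<Gamma> \<psi>1" "h = star \<Gamma> \<psi>2"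
      unfolding Aff_def by blast
    have "compose (orbits \<Gamma>) f h = star \<Gamma> (\<psi>1 \<circ> \<psi>2)" using star_comp[OF g(1) p(1,2)] p by simp
    then have "sharp P \<Gamma> \<Gamma>' (compose (orbits \<Gamma>) f h) = star \<Gamma>' (cj P \<psi>1 \<circ> cj P \<psi>2)"
      using sharp_star[OF P G' g affnorm_comp[OF p(1,2)]] cj_comp[OF bP] by simp
    also have "\<dots> = compose (orbits \<Gamma>') (star \<Gamma>' (cj P \<psi>1)) (star \<Gamma>' (cj P \<psi>2))"
      using star_comp[OF g(2)] affnorm_cj_transport[OF P G'] p by blast
    finally show "sharp P \<Gamma> \<Gamma>' (compose (orbits \<Gamma>) f h)
         = compose (orbits \<Gamma>') (sharp P \<Gamma> \<Gamma>' f) (sharp P \<Gamma> \<Gamma>' h)"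
      using sharp_star[OF P G' g] p by simp
  qed
qed

definition minnorm :: "pt set \<Rightarrow> bool" where
  "minnorm L \<longleftrightarrow> (\<forall>x\<in>L. x \<noteq> 0 \<longrightarrow> 1 \<le> norm x)"

lemma orbit_Gam: "orbit (Gam L) x = {n + x | n. n \<in> L} \<union> {n - x | n. n \<in> L}"
proof
  show "orbit (Gam L) x \<subseteq> {n + x | n. n \<in> L} \<union> {n - x | n. n \<in> L}"
    unfolding orbit_def Gam_def by (auto simp: aff_apply)
  show "{n + x | n. n \<in> L} \<union> {n - x | n. n \<in> L} \<subseteq> orbit (Gam L) x"
  proof
    fix y assume "y \<in> {n + x | n. n \<in> L} \<union> {n - x | n. n \<in> L}"
    then consider n where "n \<in> L" "y = aff n (mat 1) x" | n where "n \<in> L" "y = aff n (- mat 1) x"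
      by (auto simp: aff_apply)
    then show "y \<in> orbit (Gam L) x"
    proof cases
      case 1 then show ?thesis unfolding orbit_def using Gam_tr by blast
    next
      case 2 then show ?thesis unfolding orbit_def using Gam_ptr by blast
    qed
  qed
qed

lemma small_bound:
  assumes "minnorm L" "k \<in> L" "norm w < 1/2"
  shows "norm w \<le> norm (k + w)"
proof (cases "k = 0")
  case True then show ?thesis by simp
next
  case False
  then have "1 \<le> norm k" using assms unfolding minnorm_def by blast
  moreover have "norm k - norm w \<le> norm (k + w)" by (rule norm_diff_ineq)
  ultimately show ?thesis using assms(3) by linarith
qed

lemma orbdist_small:
  assumes l: "lat L" and m: "minnorm L" and c: "2 *\<^sub>R c \<in> L" and w: "norm w < 1/2"
  shows "orbdist (orbit (Gam L) c) (orbit (Gam L) (c + w)) = norm w"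
  unfolding orbdist_def
proof (rule cInf_eq_minimum)
  have g: "grp (Gam L)" using grp_Gam[OF l] .
  show "norm w \<in> {dist x y |x y. x \<in> orbit (Gam L) c \<and> y \<in> orbit (Gam L) (c + w)}"
  proof -
    have "norm w = dist c (c + w)" by (simp add: dist_norm)
    then show ?thesis using orbit_self[OF g, of c] orbit_self[OF g, of "c + w"] by blast
  qed
next
  fix d assume "d \<in> {dist x y |x y. x \<in> orbit (Gam L) c \<and> y \<in> orbit (Gam L) (c + w)}"
  then obtain x y where xy: "x \<in> orbit (Gam L) c" "y \<in> orbit (Gam L) (c + w)" "d = dist x y" by blast
  have "\<exists>k\<in>L. d = norm (k + w) \<or> d = norm (k - w)"
  proof -
    obtain n where n: "n \<in> L" "x = n + c \<or> x = n - c" using xy(1) unfolding orbit_Gam by blast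
    obtain m where mm: "m \<in> L" "y = m + (c + w) \<or> y = m - (c + w)" using xy(2) unfolding orbit_Gam by blast
    have d: "d = norm (x - y)" using xy(3) by (simp add: dist_norm)
    have L0: "n - m \<in> L" using lat_diff[OF l n(1) mm(1)] .
    have L1: "n - m \<in> L" "n - m + 2 *\<^sub>R c \<in> L" "n - m - 2 *\<^sub>R c \<in> L"
      using L0 lat_add[OF l L0 c] lat_diff[OF l L0 c] by auto
    from n(2) mm(2) show ?thesis
    proof (elim disjE)
      assume hx: "x = n + c" and hy: "y = m + (c + w)"
      have "x - y = (n - m) - w" by (simp only: hx hy) (simp add: algebra_simps)
      then have "d = norm ((n - m) - w)" using d by simp
      then show ?thesis using L1 by blast
    next
      assume hx: "x = n + c" and hy: "y = m - (c + w)"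
      have "x - y = (n - m + 2 *\<^sub>R c) + w" by (simp only: hx hy) (simp add: algebra_simps scaleR_2)
      then have "d = norm ((n - m + 2 *\<^sub>R c) + w)" using d by simp
      then show ?thesis using L1 by blast
    next
      assume hx: "x = n - c" and hy: "y = m + (c + w)"
      have "x - y = (n - m - 2 *\<^sub>R c) - w" by (simp only: hx hy) (simp add: algebra_simps scaleR_2)
      then have "d = norm ((n - m - 2 *\<^sub>R c) - w)" using d by simp
      then show ?thesis using L1 by blast
    next
      assume hx: "x = n - c" and hy: "y = m - (c + w)"
      have "x - y = (n - m) + w" by (simp only: hx hy) (simp add: algebra_simps)
      then have "d = norm ((n - m) + w)" using d by simp
      then show ?thesis using L1 by blast
    qed
  qed
  then obtain k where k: "k \<in> L" "d = norm (k + w) \<or> d = norm (k - w)" by blast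
  have "norm (- w) < 1/2" using w by simp
  then show "norm w \<le> d" using k small_bound[OF m k(1) w] small_bound[OF m k(1), of "-w"] by auto
qed

lemma analytic:
  assumes l: "lat L" and m: "minnorm L" and phi: "aff a A \<in> affnorm (Gam L)"
    and pres: "\<forall>Q1 \<in> orbits (Gam L). \<forall>Q2 \<in> orbits (Gam L).
                 orbdist (star (Gam L) (aff a A) Q1) (star (Gam L) (aff a A) Q2) = orbdist Q1 Q2"
  shows "norm (A *v v) = norm v"
proof -
  have g: "grp (Gam L)" using grp_Gam[OF l] .
  obtain a' A' where ph: "aff a A = aff a' A'" "2 *\<^sub>R a' \<in> L" using affnorm_Gam_dest[OF l phi] by metis
  have a: "2 *\<^sub>R a \<in> L" using ph aff_eq_iff by metis
  have small: "norm (A *v u) = norm u" if u: "norm u < 1/2" "norm (A *v u) < 1/2" for u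
  proof -
    have "orbdist (star (Gam L) (aff a A) (orbit (Gam L) 0)) (star (Gam L) (aff a A) (orbit (Gam L) (0 + u)))
       = orbdist (orbit (Gam L) 0) (orbit (Gam L) (0 + u))"
      using pres orbits_orbit by blast
    moreover have "star (Gam L) (aff a A) (orbit (Gam L) 0) = orbit (Gam L) a"
      using star_orbit[OF g phi] by (simp add: aff_apply)
    moreover have "star (Gam L) (aff a A) (orbit (Gam L) (0 + u)) = orbit (Gam L) (a + A *v u)"
      using star_orbit[OF g phi] by (simp add: aff_apply)
    moreover have "orbdist (orbit (Gam L) 0) (orbit (Gam L) (0 + u)) = norm u"
      using orbdist_small[OF l m _ u(1), of 0] lat_zero[OF l] by simp
    moreover have "orbdist (orbit (Gam L) a) (orbit (Gam L) (a + A *v u)) = norm (A *v u)"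
      using orbdist_small[OF l m a u(2)] .
    ultimately show ?thesis by simp
  qed
  define t where "t = 1 / (4 * (norm v + norm (A *v v) + 1))"
  have pos: "0 < norm v + norm (A *v v) + 1" using norm_ge_zero[of v] norm_ge_zero[of "A *v v"] by linarith
  have t: "t > 0" unfolding t_def using pos by simp
  have p4: "0 < 4 * (norm v + norm (A *v v) + 1)" using pos by simp
  have n0: "0 \<le> norm v" "0 \<le> norm (A *v v)" by simp_all
  have "t * norm v = norm v / (4 * (norm v + norm (A *v v) + 1))" unfolding t_def by simp
  also have "\<dots> < 1/2" apply (subst pos_divide_less_eq[OF p4]) apply (simp add: algebra_simps) using n0 by linarith
  finally have t1a: "t * norm v < 1/2" .
  have "t * norm (A *v v) = norm (A *v v) / (4 * (norm v + norm (A *v v) + 1))" unfolding t_def by simp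
  also have "\<dots> < 1/2" apply (subst pos_divide_less_eq[OF p4]) apply (simp add: algebra_simps) using n0 by linarith
  finally have t1b: "t * norm (A *v v) < 1/2" .
  note t1 = t1a t1b
  have e1: "norm (t *\<^sub>R v) = t * norm v" using t by simp
  have e2: "norm (A *v (t *\<^sub>R v)) = t * norm (A *v v)" using t by (simp add: matrix_vector_mult_scaleR)
  have "norm (A *v (t *\<^sub>R v)) = norm (t *\<^sub>R v)"
    by (rule small) (simp only: e1 e2 t1)+
  then have "t * norm (A *v v) = t * norm v" using t by (simp add: matrix_vector_mult_scaleR)
  then show ?thesis using t by simp
qed

lemma norm2_vec: "norm x ^ 2 = (x$1)^2 + (x$2)^2" for x :: pt
  by (simp add: norm_vec_def L2_set_def sum_2)

lemma norm_eq_iff2: "norm x = norm y \<longleftrightarrow> (x$1)^2 + (x$2)^2 = (y$1)^2 + (y$2)^2" for x y :: pt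
  by (metis norm2_vec norm_ge_zero power2_eq_iff_nonneg)

lemma mv_comp: "(A *v x) $ i = A$i$1 * x$1 + A$i$2 * x$2" for A :: "real^2^2"
  by (simp add: matrix_vector_mult_def sum_2)

lemma mm_comp: "(A ** B) $ i $ j = A$i$1 * B$1$j + A$i$2 * B$2$j" for A B :: "real^2^2"
  by (simp add: matrix_matrix_mult_def sum_2)

lemma vec2_eq: "x = y \<longleftrightarrow> x$1 = y$1 \<and> x$2 = y$2" for x y :: "'a^2"
  by (simp add: vec_eq_iff forall_2)

lemma mat2_eq: "A = B \<longleftrightarrow> A$1$1 = B$1$1 \<and> A$1$2 = B$1$2 \<and> A$2$1 = B$2$1 \<and> A$2$2 = B$2$2"
  for A B :: "real^2^2"
  by (simp add: vec_eq_iff forall_2)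

lemma e_comp[simp]: "e1$1 = 1" "e1$2 = 0" "e2$1 = 0" "e2$2 = 1"
  by (simp_all add: e1_def e2_def)

lemma mat_comp[simp]:
  "matA$1$1 = -1" "matA$1$2 = 0" "matA$2$1 = 0" "matA$2$2 = 1"
  "matB$1$1 = -1" "matB$1$2 = 1" "matB$2$1 = 0" "matB$2$2 = 1"
  "matC$1$1 = 0" "matC$1$2 = 1" "matC$2$1 = 1" "matC$2$2 = 0"
  "matD$1$1 = 1" "matD$1$2 = -1/2" "matD$2$1 = 0" "matD$2$2 = sqrt 3 / 2"
  by (simp_all add: matA_def matB_def matC_def matD_def)

lemma mat1_comp[simp]: "(mat 1 :: real^2^2)$1$1 = 1" "(mat 1 :: real^2^2)$1$2 = 0"
   "(mat 1 :: real^2^2)$2$1 = 0" "(mat 1 :: real^2^2)$2$2 = 1"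
  by (simp_all add: mat_def)

definition Dinv :: "real^2^2" where "Dinv = vector [vector [1, 1 / sqrt 3], vector [0, 2 / sqrt 3]]"

lemma Dinv_comp[simp]: "Dinv$1$1 = 1" "Dinv$1$2 = 1 / sqrt 3" "Dinv$2$1 = 0" "Dinv$2$2 = 2 / sqrt 3"
  by (simp_all add: Dinv_def)

lemma D_Dinv: "matD ** Dinv = mat 1" "Dinv ** matD = mat 1"
  by (simp_all add: mat2_eq mm_comp field_simps)

lemma invol: "matA ** matA = mat 1" "matB ** matB = mat 1" "matC ** matC = mat 1"
  by (simp_all add: mat2_eq mm_comp)

definition wv :: pt where "wv = e1 /\<^sub>R 2 + (sqrt 3 / 2) *\<^sub>R e2"

abbreviation LM where "LM \<equiv> LatUV e1 e2"
abbreviation LD where "LD \<equiv> LatUV e1 wv"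

lemma Mgrp_Gam: "Mgrp = Gam LM"
  unfolding Mgrp_def by (rule gen_Gam)

lemma Deltagrp_Gam: "Deltagrp = Gam LD"
  unfolding Deltagrp_def wv_def by (rule gen_Gam)

lemma LM_iff: "x \<in> LM \<longleftrightarrow> x$1 \<in> \<int> \<and> x$2 \<in> \<int>"
proof
  assume "x \<in> LM"
  then obtain i j where "x = of_int i *\<^sub>R e1 + of_int j *\<^sub>R e2" unfolding LatUV_def by blast
  then show "x$1 \<in> \<int> \<and> x$2 \<in> \<int>" by simp
next
  assume "x$1 \<in> \<int> \<and> x$2 \<in> \<int>"
  then obtain i j where ij: "x$1 = of_int i" "x$2 = of_int j" by (metis Ints_cases)
  then have "x = of_int i *\<^sub>R e1 + of_int j *\<^sub>R e2" by (simp add: vec2_eq)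
  then show "x \<in> LM" unfolding LatUV_def by blast
qed

lemma int_abs_ge1: "(x::real) \<in> \<int> \<Longrightarrow> x \<noteq> 0 \<Longrightarrow> 1 \<le> \<bar>x\<bar>"
proof -
  assume "x \<in> \<int>" "x \<noteq> 0"
  then obtain i where i: "x = of_int i" "i \<noteq> 0" by (metis Ints_cases of_int_0)
  then have "1 \<le> \<bar>i\<bar>" by linarith
  then have "1 \<le> \<bar>(of_int i :: real)\<bar>" by (metis of_int_1_le_iff of_int_abs)
  then show ?thesis using i by simp
qed

lemma minnorm_LM: "minnorm LM"
  unfolding minnorm_def
proof (intro ballI impI)
  fix x assume x: "x \<in> LM" "x \<noteq> 0"
  then have i: "x$1 \<in> \<int>" "x$2 \<in> \<int>" using LM_iff by auto
  have "x$1 \<noteq> 0 \<or> x$2 \<noteq> 0" using x(2) by (simp add: vec2_eq)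
  then show "1 \<le> norm x"
    using int_abs_ge1[OF i(1)] int_abs_ge1[OF i(2)] component_le_norm_cart[of x 1] component_le_norm_cart[of x 2]
    by auto
qed

lemma cj_Gam:
  assumes i: "A ** A' = mat 1" "A' ** A = mat 1"
  shows "cj (aff 0 A) ` Gam L = Gam ((*v) A ` L)"
proof -
  have t: "cj (aff 0 A) (aff n (mat 1)) = aff (A *v n) (mat 1)" for n using cj_aff_tr[OF i] .
  have p: "cj (aff 0 A) (aff n (- mat 1)) = aff (A *v n) (- mat 1)" for n using cj_aff_ptr[OF i, of 0] by simp
  have G: "Gam K = (\<lambda>n. aff n (mat 1)) ` K \<union> (\<lambda>n. aff n (- mat 1)) ` K" for K
    unfolding Gam_def by blast
  show ?thesis unfolding G image_Un image_image t p by simp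
qed

lemma wv_comp[simp]: "wv$1 = 1/2" "wv$2 = sqrt 3 / 2"
  by (simp_all add: wv_def)

lemma D_LM: "(*v) matD ` LM = LD"
proof
  show "(*v) matD ` LM \<subseteq> LD"
  proof
    fix y assume "y \<in> (*v) matD ` LM"
    then obtain i j where y: "y = matD *v (of_int i *\<^sub>R e1 + of_int j *\<^sub>R e2)" unfolding LatUV_def by blast
    have "y = of_int (i - j) *\<^sub>R e1 + of_int j *\<^sub>R wv" unfolding y by (simp add: vec2_eq mv_comp field_simps)
    then show "y \<in> LD" unfolding LatUV_def by blast
  qed
  show "LD \<subseteq> (*v) matD ` LM"
  proof
    fix y assume "y \<in> LD"
    then obtain i j where y: "y = of_int i *\<^sub>R e1 + of_int j *\<^sub>R wv" unfolding LatUV_def by blast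
    have "y = matD *v (of_int (i + j) *\<^sub>R e1 + of_int j *\<^sub>R e2)" unfolding y by (simp add: vec2_eq mv_comp field_simps)
    moreover have "of_int (i + j) *\<^sub>R e1 + of_int j *\<^sub>R e2 \<in> LM" unfolding LatUV_def by blast
    ultimately show "y \<in> (*v) matD ` LM" by blast
  qed
qed

definition PD :: amap where "PD = aff 0 matD"

lemma PD_affgroup: "PD \<in> affgroup"
  unfolding PD_def affgroup_def invertible_def using D_Dinv by blast

lemma PD_bij: "bij PD" using PD_affgroup affgroup_bij by blast

lemma cj_PD_aff: "cj PD (aff b B) = aff (matD *v b) (matD ** B ** Dinv)"
  unfolding cj_def PD_def aff_inv[OF D_Dinv] by (simp add: aff_comp)

lemma part2: "(\<lambda>g. aff 0 matD \<circ> g \<circ> inv (aff 0 matD)) ` Mgrp = Deltagrp"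
proof -
  have lam: "(\<lambda>g. aff 0 matD \<circ> g \<circ> inv (aff 0 matD)) = cj (aff 0 matD)" unfolding cj_def by (rule ext) simp
  have "(\<lambda>g. aff 0 matD \<circ> g \<circ> inv (aff 0 matD)) ` Mgrp = cj (aff 0 matD) ` Gam LM"
    unfolding lam Mgrp_Gam ..
  also have "\<dots> = Gam LD" using cj_Gam[OF D_Dinv] D_LM by simp
  finally show ?thesis using Deltagrp_Gam by simp
qed

lemma Delta_cj: "Deltagrp = cj PD ` Mgrp"
  using part2 unfolding PD_def cj_def[abs_def] by simp

lemma int_sq_ge1: "(i::int) \<noteq> 0 \<Longrightarrow> 1 \<le> i * i"
  by (metis abs_mult_self_eq int_one_le_iff_zero_less mult_le_cancel_left1 zero_less_abs_iff
      abs_ge_zero dual_order.trans linorder_not_less mult_right_mono)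

lemma quad_ge1: "(i::int) \<noteq> 0 \<or> j \<noteq> 0 \<Longrightarrow> 1 \<le> i*i + i*j + j*j"
proof -
  assume h: "i \<noteq> 0 \<or> j \<noteq> 0"
  define X where "X = i*i + i*j + j*j"
  define Y where "Y = i*i + j*j + (i+j)*(i+j)"
  have e: "2 * X = Y" unfolding X_def Y_def by (simp add: algebra_simps)
  have s: "0 \<le> i*i" "0 \<le> j*j" "0 \<le> (i+j)*(i+j)" by simp_all
  have "2 \<le> i*i + j*j + (i+j)*(i+j)"
  proof (cases "i = 0")
    case True then have "j \<noteq> 0" using h by simp
    then show ?thesis using True int_sq_ge1[of j] by simp
  next
    case False
    show ?thesis
    proof (cases "j = 0")
      case True then show ?thesis using False int_sq_ge1[of i] by simp
    next
      case False
      then show ?thesis using \<open>i \<noteq> 0\<close> int_sq_ge1[of i] int_sq_ge1[of j] s(3) by linarith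
    qed
  qed
  then have "2 \<le> Y" unfolding Y_def .
  then show ?thesis using e unfolding X_def[symmetric] by linarith
qed

lemma minnorm_LD: "minnorm LD"
  unfolding minnorm_def
proof (intro ballI impI)
  fix x assume x: "x \<in> LD" "x \<noteq> 0"
  then obtain i j where xe: "x = of_int i *\<^sub>R e1 + of_int j *\<^sub>R wv" unfolding LatUV_def by blast
  then have ij: "i \<noteq> 0 \<or> j \<noteq> 0" using x(2) by auto
  have "norm x ^ 2 = of_int (i*i + i*j + j*j)"
    unfolding norm2_vec xe by (simp add: power2_eq_square field_simps)
  moreover have "(1::real) \<le> of_int (i*i + i*j + j*j)" using quad_ge1[OF ij] by linarith
  ultimately have "1 \<le> norm x ^ 2" by simp
  then show "1 \<le> norm x" using power2_le_imp_le[of 1 "norm x"] by simp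
qed

lemma int_small: "(x::real) \<in> \<int> \<Longrightarrow> x^2 < 4 \<Longrightarrow> x = -1 \<or> x = 0 \<or> x = 1"
proof -
  assume "x \<in> \<int>" "x^2 < 4"
  then obtain i where i: "x = of_int i" "of_int (i*i) < (4::real)" by (metis Ints_cases of_int_mult power2_eq_square)
  then have ii: "i * i < 4" by linarith
  have "\<bar>i\<bar> < 2"
  proof (rule ccontr)
    assume "\<not> \<bar>i\<bar> < 2"
    then have "2 * 2 \<le> \<bar>i\<bar> * \<bar>i\<bar>" by (intro mult_mono) auto
    then show False using ii by (simp add: abs_mult_self_eq)
  qed
  then have "i = -1 \<or> i = 0 \<or> i = 1" by auto
  then show ?thesis using i by auto
qed

lemma normD2: "norm (matD *v x) ^ 2 = (x$1)^2 - x$1 * x$2 + (x$2)^2"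
  unfolding norm2_vec by (simp add: mv_comp power2_eq_square field_simps)

definition mk :: "real \<Rightarrow> real \<Rightarrow> real \<Rightarrow> real \<Rightarrow> real^2^2" where
  "mk a b c d = vector [vector [a, b], vector [c, d]]"
lemma mk_eq[simp]: "mk a b c d = mk a' b' c' d' \<longleftrightarrow> a = a' \<and> b = b' \<and> c = c' \<and> d = d'"
  unfolding mk_def mat2_eq by simp
lemma mk_neg[simp]: "- mk a b c d = mk (-a) (-b) (-c) (-d)"
  unfolding mk_def mat2_eq by simp
lemma mk_mult[simp]: "mk a b c d ** mk a' b' c' d' = mk (a*a' + b*c') (a*b' + b*d') (c*a' + d*c') (c*b' + d*d')"
  unfolding mk_def mat2_eq by (simp add: mm_comp)
lemma mk_self: "\<Psi> = mk (\<Psi>$1$1) (\<Psi>$1$2) (\<Psi>$2$1) (\<Psi>$2$2)"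
  unfolding mk_def mat2_eq by simp
lemma mk_mats: "mat 1 = mk 1 0 0 1" "matA = mk (-1) 0 0 1" "matB = mk (-1) 1 0 1" "matC = mk 0 1 1 0"
  unfolding mk_def mat2_eq by simp_all

lemma entries_M:
  fixes a b c d :: real
  assumes "a = -1 \<or> a = 0 \<or> a = 1" "c = -1 \<or> c = 0 \<or> c = 1" "b = -1 \<or> b = 0 \<or> b = 1" "d = -1 \<or> d = 0 \<or> d = 1"
    "a^2 + c^2 = 1" "b^2 + d^2 = 1" "(a + b)^2 + (c + d)^2 = 2"
  shows "\<exists>W \<in> {mat 1, matA, matC, matA ** matC}. mk a b c d = W \<or> mk a b c d = - W"
  using assms unfolding mk_mats by (elim disjE) simp_all

lemma entries_D:
  fixes a b c d :: real
  assumes "a = -1 \<or> a = 0 \<or> a = 1" "c = -1 \<or> c = 0 \<or> c = 1" "b = -1 \<or> b = 0 \<or> b = 1" "d = -1 \<or> d = 0 \<or> d = 1"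
    "a^2 - a * c + c^2 = 1" "b^2 - b * d + d^2 = 1" "(a + b)^2 - (a + b) * (c + d) + (c + d)^2 = 1"
  shows "\<exists>W \<in> {mat 1, matB, matC, matB ** matC, matC ** matB, matB ** matC ** matB}. mk a b c d = W \<or> mk a b c d = - W"
  using assms unfolding mk_mats by (elim disjE) simp_all

lemma classify_M:
  assumes ints: "\<Psi>$1$1 \<in> \<int>" "\<Psi>$1$2 \<in> \<int>" "\<Psi>$2$1 \<in> \<int>" "\<Psi>$2$2 \<in> \<int>"
    and iso: "\<And>v. norm (\<Psi> *v v) = norm v"
  shows "\<exists>W \<in> {mat 1, matA, matC, matA ** matC}. \<Psi> = W \<or> \<Psi> = - W"
proof -
  have q1: "(\<Psi>$1$1)^2 + (\<Psi>$2$1)^2 = 1" using iso[of e1] unfolding norm_eq_iff2 by (simp add: mv_comp)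
  have q2: "(\<Psi>$1$2)^2 + (\<Psi>$2$2)^2 = 1" using iso[of e2] unfolding norm_eq_iff2 by (simp add: mv_comp)
  have q3: "(\<Psi>$1$1 + \<Psi>$1$2)^2 + (\<Psi>$2$1 + \<Psi>$2$2)^2 = 2"
    using iso[of "e1 + e2"] unfolding norm_eq_iff2 by (simp add: mv_comp algebra_simps)
  have b: "\<Psi>$1$1 = -1 \<or> \<Psi>$1$1 = 0 \<or> \<Psi>$1$1 = 1" "\<Psi>$2$1 = -1 \<or> \<Psi>$2$1 = 0 \<or> \<Psi>$2$1 = 1"
     "\<Psi>$1$2 = -1 \<or> \<Psi>$1$2 = 0 \<or> \<Psi>$1$2 = 1" "\<Psi>$2$2 = -1 \<or> \<Psi>$2$2 = 0 \<or> \<Psi>$2$2 = 1"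
    using int_small[OF ints(1)] int_small[OF ints(3)] int_small[OF ints(2)] int_small[OF ints(4)] q1 q2
    by (smt (verit) zero_le_power2)+
  from entries_M[OF b(1,2,3,4) q1 q2 q3] show ?thesis using mk_self[of \<Psi>] by metis
qed

lemma classify_D:
  assumes ints: "\<Psi>$1$1 \<in> \<int>" "\<Psi>$1$2 \<in> \<int>" "\<Psi>$2$1 \<in> \<int>" "\<Psi>$2$2 \<in> \<int>"
    and iso: "\<And>v. norm (matD *v (\<Psi> *v v)) = norm (matD *v v)"
  shows "\<exists>W \<in> {mat 1, matB, matC, matB ** matC, matC ** matB, matB ** matC ** matB}. \<Psi> = W \<or> \<Psi> = - W"
proof -
  have isq: "norm (matD *v (\<Psi> *v v)) ^ 2 = norm (matD *v v) ^ 2" for v using iso by simp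
  have q1: "(\<Psi>$1$1)^2 - \<Psi>$1$1 * \<Psi>$2$1 + (\<Psi>$2$1)^2 = 1" using isq[of e1] unfolding normD2 by (simp add: mv_comp)
  have q2: "(\<Psi>$1$2)^2 - \<Psi>$1$2 * \<Psi>$2$2 + (\<Psi>$2$2)^2 = 1" using isq[of e2] unfolding normD2 by (simp add: mv_comp)
  have q3: "(\<Psi>$1$1 + \<Psi>$1$2)^2 - (\<Psi>$1$1 + \<Psi>$1$2) * (\<Psi>$2$1 + \<Psi>$2$2) + (\<Psi>$2$1 + \<Psi>$2$2)^2 = 1"
    using isq[of "e1 + e2"] unfolding normD2 by (simp add: mv_comp algebra_simps)
  have bnd: "x^2 < 4 \<and> y^2 < 4" if "x^2 - x*y + y^2 = (1::real)" for x y
  proof -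
    have "4 * (x^2 - x*y + y^2) = 3 * x^2 + (x - 2*y)^2" "4 * (x^2 - x*y + y^2) = 3 * y^2 + (y - 2*x)^2"
      by (simp_all add: power2_eq_square algebra_simps)
    then have "3 * x^2 + (x - 2*y)^2 = 4" "3 * y^2 + (y - 2*x)^2 = 4" using that by simp_all
    then show ?thesis using zero_le_power2[of "x - 2*y"] zero_le_power2[of "y - 2*x"] by linarith
  qed
  have b: "\<Psi>$1$1 = -1 \<or> \<Psi>$1$1 = 0 \<or> \<Psi>$1$1 = 1" "\<Psi>$2$1 = -1 \<or> \<Psi>$2$1 = 0 \<or> \<Psi>$2$1 = 1"
     "\<Psi>$1$2 = -1 \<or> \<Psi>$1$2 = 0 \<or> \<Psi>$1$2 = 1" "\<Psi>$2$2 = -1 \<or> \<Psi>$2$2 = 0 \<or> \<Psi>$2$2 = 1"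
    using int_small[OF ints(1)] int_small[OF ints(3)] int_small[OF ints(2)] int_small[OF ints(4)]
      bnd[OF q1] bnd[OF q2] by blast+
  from entries_D[OF b(1,2,3,4) q1 q2 q3] show ?thesis using mk_self[of \<Psi>] by metis
qed

lemma gen_on_star_id:
  assumes "grp \<Gamma>" shows "star \<Gamma> id \<in> gen_on (orbits \<Gamma>) S"
  using star_id[OF assms] gen_on.gen_on_id by metis

lemma gen_on_step:
  assumes g: "grp \<Gamma>" and h: "star \<Gamma> h \<in> gen_on (orbits \<Gamma>) S" "h \<in> affnorm \<Gamma>"
    and psi: "\<psi> \<in> affnorm \<Gamma>" "star \<Gamma> \<psi> \<in> S"
  shows "star \<Gamma> (\<psi> \<circ> h) \<in> gen_on (orbits \<Gamma>) S"
  using star_comp[OF g psi(1) h(2)] gen_on.gen_on_mult[OF h(1) psi(2)] by simp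

lemma gen_on_gen:
  assumes g: "grp \<Gamma>" and psi: "\<psi> \<in> affnorm \<Gamma>" "star \<Gamma> \<psi> \<in> S"
  shows "star \<Gamma> \<psi> \<in> gen_on (orbits \<Gamma>) S"
  using gen_on_step[OF g gen_on_star_id[OF g] affnorm_id psi] by simp

lemma gen_on_sub:
  assumes g: "grp \<Gamma>" and S: "S \<subseteq> star \<Gamma> ` H" and H: "H \<subseteq> affnorm \<Gamma>" "id \<in> H"
    "\<And>\<psi> \<xi>. \<psi> \<in> H \<Longrightarrow> \<xi> \<in> H \<Longrightarrow> \<psi> \<circ> \<xi> \<in> H" "\<And>\<psi>. \<psi> \<in> H \<Longrightarrow> inv \<psi> \<in> H"
  shows "gen_on (orbits \<Gamma>) S \<subseteq> star \<Gamma> ` H"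
proof
  fix f assume "f \<in> gen_on (orbits \<Gamma>) S"
  then show "f \<in> star \<Gamma> ` H"
  proof (induct rule: gen_on.induct)
    case gen_on_id
    have "(\<lambda>x\<in>orbits \<Gamma>. x) = star \<Gamma> id" using star_id[OF g] by simp
    then show ?case using H(2) by simp
  next
    case (gen_on_mult f s)
    from gen_on_mult(2) obtain \<xi> where c1: "\<xi> \<in> H" "f = star \<Gamma> \<xi>" by (auto simp only: image_iff)
    from gen_on_mult(3) S obtain \<psi> where c2: "\<psi> \<in> H" "s = star \<Gamma> \<psi>" by (auto simp only: image_iff subset_iff)
    have a: "\<psi> \<in> affnorm \<Gamma>" "\<xi> \<in> affnorm \<Gamma>" using H(1) c1 c2 by auto
    have "compose (orbits \<Gamma>) s f = star \<Gamma> (\<psi> \<circ> \<xi>)" using star_comp[OF g a] c1 c2 by simp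
    moreover have "\<psi> \<circ> \<xi> \<in> H" using H(3) c1 c2 by simp
    ultimately show ?case by simp
  next
    case (gen_on_inv f s)
    from gen_on_inv(2) obtain \<xi> where c1: "\<xi> \<in> H" "f = star \<Gamma> \<xi>" by (auto simp only: image_iff)
    from gen_on_inv(3) S obtain \<psi> where c2: "\<psi> \<in> H" "s = star \<Gamma> \<psi>" by (auto simp only: image_iff subset_iff)
    have a: "\<psi> \<in> affnorm \<Gamma>" "\<xi> \<in> affnorm \<Gamma>" "inv \<psi> \<in> affnorm \<Gamma>" using H(1) H(4) c1 c2 by auto
    have "restrict (inv_into (orbits \<Gamma>) s) (orbits \<Gamma>) = star \<Gamma> (inv \<psi>)"
      using star_inv[OF g a(1)] c2 by simp
    then have "compose (orbits \<Gamma>) (restrict (inv_into (orbits \<Gamma>) s) (orbits \<Gamma>)) f = star \<Gamma> (inv \<psi> \<circ> \<xi>)"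
      using star_comp[OF g a(3) a(2)] c1 by simp
    moreover have "inv \<psi> \<circ> \<xi> \<in> H" using H(3,4) c1 c2 by simp
    ultimately show ?case by simp
  qed
qed

definition HP :: "amap \<Rightarrow> amap set" where
  "HP P = {\<psi> \<in> affnorm Mgrp. isom (cj P \<psi>)}"

lemma isom_comp: "isom f \<Longrightarrow> isom g \<Longrightarrow> isom (f \<circ> g)"
  unfolding isom_def by simp

lemma isom_inv: "bij f \<Longrightarrow> isom f \<Longrightarrow> isom (inv f)"
proof -
  assume b: "bij f" and i: "isom f"
  have "dist (inv f x) (inv f y) = dist x y" for x y
    using i[unfolded isom_def, rule_format, of "inv f x" "inv f y"] b by (simp add: bij_is_surj surj_f_inv_f)
  then show ?thesis unfolding isom_def by blast
qed

lemma cj_inv: "bij P \<Longrightarrow> bij g \<Longrightarrow> cj P (inv g) = inv (cj P g)"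
proof -
  assume b: "bij P" "bij g"
  have gi1: "g \<circ> inv g = id" by (rule surj_iff[THEN iffD1, OF bij_is_surj[OF b(2)]])
  have gi2: "inv g \<circ> g = id" by (rule inv_o_cancel[OF bij_is_inj[OF b(2)]])
  note gi = gi1 gi2
  have "cj P g \<circ> cj P (inv g) = cj P (g \<circ> inv g)" using cj_comp[OF b(1), of g "inv g"] by (rule sym)
  also have "\<dots> = id" unfolding gi(1) using cj_id[OF b(1)] .
  finally have 1: "cj P g \<circ> cj P (inv g) = id" .
  have "cj P (inv g) \<circ> cj P g = cj P (inv g \<circ> g)" using cj_comp[OF b(1), of "inv g" g] by (rule sym)
  also have "\<dots> = id" unfolding gi(2) using cj_id[OF b(1)] .
  finally have 2: "cj P (inv g) \<circ> cj P g = id" .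
  show ?thesis by (rule inv_unique_comp[OF 1 2, symmetric])
qed

lemma HP_props:
  assumes P: "bij P"
  shows "HP P \<subseteq> affnorm Mgrp" "id \<in> HP P"
    "\<And>\<psi> \<xi>. \<psi> \<in> HP P \<Longrightarrow> \<xi> \<in> HP P \<Longrightarrow> \<psi> \<circ> \<xi> \<in> HP P" "\<And>\<psi>. \<psi> \<in> HP P \<Longrightarrow> inv \<psi> \<in> HP P"
proof -
  show "HP P \<subseteq> affnorm Mgrp" unfolding HP_def by blast
  show "id \<in> HP P" unfolding HP_def using affnorm_id cj_id[OF P] by (simp add: isom_def)
  show "\<psi> \<circ> \<xi> \<in> HP P" if "\<psi> \<in> HP P" "\<xi> \<in> HP P" for \<psi> \<xi>
    using that affnorm_comp cj_comp[OF P] isom_comp unfolding HP_def by auto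
  show "inv \<psi> \<in> HP P" if "\<psi> \<in> HP P" for \<psi>
  proof -
    have "bij \<psi>" using that affnorm_bij unfolding HP_def by blast
    then have "cj P (inv \<psi>) = inv (cj P \<psi>)" using cj_inv[OF P] by blast
    moreover have "bij (cj P \<psi>)" using cj_bij[OF P \<open>bij \<psi>\<close>] .
    ultimately show ?thesis using that affnorm_inv isom_inv unfolding HP_def by auto
  qed
qed

lemma isom_aff: "(\<And>v. norm (A *v v) = norm v) \<Longrightarrow> isom (aff a A)"
  unfolding isom_def dist_norm by (simp add: aff_apply flip: matrix_vector_mult_diff_distrib)

lemma cj_id_P: "cj id \<psi> = \<psi>"
  unfolding cj_def by simp

lemma grpM: "grp Mgrp" unfolding Mgrp_Gam by (rule grp_Gam[OF lat_LatUV])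
lemma grpD: "grp Deltagrp" unfolding Deltagrp_Gam by (rule grp_Gam[OF lat_LatUV])

lemma int_mat_LM:
  assumes "A$1$1 \<in> \<int>" "A$1$2 \<in> \<int>" "A$2$1 \<in> \<int>" "A$2$2 \<in> \<int>" "n \<in> LM"
  shows "A *v n \<in> LM"
  using assms unfolding LM_iff by (simp add: mv_comp)

lemma LM_zero: "0 \<in> LM" using lat_zero[OF lat_LatUV] .

lemma affnorm_lin:
  assumes "A ** A = mat 1" "A$1$1 \<in> \<int>" "A$1$2 \<in> \<int>" "A$2$1 \<in> \<int>" "A$2$2 \<in> \<int>"
  shows "aff 0 A \<in> affnorm Mgrp"
  unfolding Mgrp_Gam
  by (rule affnorm_Gam_intro[OF lat_LatUV assms(1) assms(1)]) (use int_mat_LM assms LM_zero in auto)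

lemma affnorm_ABC: "aff 0 matA \<in> affnorm Mgrp" "aff 0 matB \<in> affnorm Mgrp" "aff 0 matC \<in> affnorm Mgrp"
  by (rule affnorm_lin; simp add: invol)+

lemma affnorm_negI: "aff 0 (- mat 1) \<in> affnorm Mgrp"
  by (rule affnorm_lin) (simp_all add: mat2_eq mm_comp)

lemma affnorm_tr: "2 *\<^sub>R a \<in> LM \<Longrightarrow> aff a (mat 1) \<in> affnorm Mgrp"
  unfolding Mgrp_Gam by (rule affnorm_Gam_intro[OF lat_LatUV]) auto

definition t1 :: amap where "t1 = aff (e1 /\<^sub>R 2) (mat 1)"
definition t2 :: amap where "t2 = aff (e2 /\<^sub>R 2) (mat 1)"

lemma e_LM: "e1 \<in> LM" "e2 \<in> LM" unfolding LM_iff by simp_all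

lemma t_affnorm: "t1 \<in> affnorm Mgrp" "t2 \<in> affnorm Mgrp"
  unfolding t1_def t2_def by (rule affnorm_tr; simp add: e_LM)+

lemma t_Kgrp: "star Mgrp t1 \<in> Kgrp" "star Mgrp t2 \<in> Kgrp"
  unfolding Kgrp_def t1_def[symmetric] t2_def[symmetric]
  by (rule gen_on_gen[OF grpM]; simp add: t_affnorm)+

abbreviation T4 where "T4 \<equiv> {0, e1 /\<^sub>R 2, e2 /\<^sub>R 2, e1 /\<^sub>R 2 + e2 /\<^sub>R 2}"

lemma trans_word:
  assumes K: "Kgrp \<subseteq> S" and a: "a' \<in> T4" and h: "h \<in> affnorm Mgrp" "star Mgrp h \<in> gen_on (orbits Mgrp) S"
  shows "star Mgrp (aff a' (mat 1) \<circ> h) \<in> gen_on (orbits Mgrp) S \<and> aff a' (mat 1) \<circ> h \<in> affnorm Mgrp"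
proof -
  have s: "star Mgrp t1 \<in> S" "star Mgrp t2 \<in> S" using t_Kgrp K by auto
  have st1: "star Mgrp (t1 \<circ> h) \<in> gen_on (orbits Mgrp) S" "t1 \<circ> h \<in> affnorm Mgrp"
    using gen_on_step[OF grpM h(2) h(1) t_affnorm(1) s(1)] affnorm_comp[OF t_affnorm(1) h(1)] by auto
  have st2: "star Mgrp (t2 \<circ> h) \<in> gen_on (orbits Mgrp) S" "t2 \<circ> h \<in> affnorm Mgrp"
    using gen_on_step[OF grpM h(2) h(1) t_affnorm(2) s(2)] affnorm_comp[OF t_affnorm(2) h(1)] by auto
  have st12: "star Mgrp (t1 \<circ> (t2 \<circ> h)) \<in> gen_on (orbits Mgrp) S" "t1 \<circ> (t2 \<circ> h) \<in> affnorm Mgrp"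
    using gen_on_step[OF grpM st2(1) st2(2) t_affnorm(1) s(1)] affnorm_comp[OF t_affnorm(1) st2(2)] by auto
  have e12: "aff (e1 /\<^sub>R 2 + e2 /\<^sub>R 2) (mat 1) \<circ> h = t1 \<circ> (t2 \<circ> h)"
    unfolding t1_def t2_def by (simp add: aff_comp comp_assoc[symmetric])
  from a consider "a' = 0" | "a' = e1 /\<^sub>R 2" | "a' = e2 /\<^sub>R 2" | "a' = e1 /\<^sub>R 2 + e2 /\<^sub>R 2" by blast
  then show ?thesis
  proof cases
    case 1 then show ?thesis using h aff_id by simp
  next
    case 2 then show ?thesis using st1 unfolding t1_def by simp
  next
    case 3 then show ?thesis using st2 unfolding t2_def by simp
  next
    case 4 then show ?thesis using st12 e12 by simp
  qed
qed

lemma aff0_comp: "aff 0 A \<circ> aff 0 B = aff 0 (A ** B)"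
  by (simp add: aff_comp)

lemma lin_word_M:
  assumes S: "star Mgrp (aff 0 matA) \<in> S" "star Mgrp (aff 0 matC) \<in> S"
    and W: "W \<in> {mat 1, matA, matC, matA ** matC}"
  shows "star Mgrp (aff 0 W) \<in> gen_on (orbits Mgrp) S \<and> aff 0 W \<in> affnorm Mgrp"
proof -
  have A: "star Mgrp (aff 0 matA) \<in> gen_on (orbits Mgrp) S" using gen_on_gen[OF grpM affnorm_ABC(1) S(1)] .
  have C: "star Mgrp (aff 0 matC) \<in> gen_on (orbits Mgrp) S" using gen_on_gen[OF grpM affnorm_ABC(3) S(2)] .
  have AC: "star Mgrp (aff 0 matA \<circ> aff 0 matC) \<in> gen_on (orbits Mgrp) S"
    using gen_on_step[OF grpM C affnorm_ABC(3) affnorm_ABC(1) S(1)] .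
  have ACn: "aff 0 matA \<circ> aff 0 matC \<in> affnorm Mgrp" using affnorm_comp affnorm_ABC by blast
  from W consider "W = mat 1" | "W = matA" | "W = matC" | "W = matA ** matC" by blast
  then show ?thesis
  proof cases
    case 1 then show ?thesis using gen_on_star_id[OF grpM] affnorm_id aff_id by simp
  next
    case 2 then show ?thesis using A affnorm_ABC by simp
  next
    case 3 then show ?thesis using C affnorm_ABC by simp
  next
    case 4 then show ?thesis using AC ACn aff0_comp by simp
  qed
qed

lemma lin_word_D:
  assumes S: "star Mgrp (aff 0 matB) \<in> S" "star Mgrp (aff 0 matC) \<in> S"
    and W: "W \<in> {mat 1, matB, matC, matB ** matC, matC ** matB, matB ** matC ** matB}"
  shows "star Mgrp (aff 0 W) \<in> gen_on (orbits Mgrp) S \<and> aff 0 W \<in> affnorm Mgrp"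
proof -
  have B: "star Mgrp (aff 0 matB) \<in> gen_on (orbits Mgrp) S" using gen_on_gen[OF grpM affnorm_ABC(2) S(1)] .
  have C: "star Mgrp (aff 0 matC) \<in> gen_on (orbits Mgrp) S" using gen_on_gen[OF grpM affnorm_ABC(3) S(2)] .
  have BC: "star Mgrp (aff 0 matB \<circ> aff 0 matC) \<in> gen_on (orbits Mgrp) S"
    using gen_on_step[OF grpM C affnorm_ABC(3) affnorm_ABC(2) S(1)] .
  have BCn: "aff 0 matB \<circ> aff 0 matC \<in> affnorm Mgrp" using affnorm_comp affnorm_ABC by blast
  have CB: "star Mgrp (aff 0 matC \<circ> aff 0 matB) \<in> gen_on (orbits Mgrp) S"
    using gen_on_step[OF grpM B affnorm_ABC(2) affnorm_ABC(3) S(2)] .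
  have CBn: "aff 0 matC \<circ> aff 0 matB \<in> affnorm Mgrp" using affnorm_comp affnorm_ABC by blast
  have BCB: "star Mgrp (aff 0 matB \<circ> (aff 0 matC \<circ> aff 0 matB)) \<in> gen_on (orbits Mgrp) S"
    using gen_on_step[OF grpM CB CBn affnorm_ABC(2) S(1)] .
  have BCBn: "aff 0 matB \<circ> (aff 0 matC \<circ> aff 0 matB) \<in> affnorm Mgrp" using affnorm_comp affnorm_ABC CBn by blast
  have e: "aff 0 matB \<circ> (aff 0 matC \<circ> aff 0 matB) = aff 0 (matB ** matC ** matB)"
    by (simp add: aff0_comp matrix_mul_assoc)
  from W consider "W = mat 1" | "W = matB" | "W = matC" | "W = matB ** matC" | "W = matC ** matB"
    | "W = matB ** matC ** matB" by blast
  then show ?thesis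
  proof cases
    case 1 then show ?thesis using gen_on_star_id[OF grpM] affnorm_id aff_id by simp
  next
    case 2 then show ?thesis using B affnorm_ABC by simp
  next
    case 3 then show ?thesis using C affnorm_ABC by simp
  next
    case 4 then show ?thesis using BC BCn aff0_comp by simp
  next
    case 5 then show ?thesis using CB CBn aff0_comp by simp
  next
    case 6 then show ?thesis using BCB BCBn e by simp
  qed
qed

lemma half_int: "2 * (x::real) \<in> \<int> \<Longrightarrow> x \<in> \<int> \<or> x - 1/2 \<in> \<int>"
proof -
  assume "2 * x \<in> \<int>"
  then obtain p where p: "2 * x = of_int p" by (metis Ints_cases)
  show ?thesis
  proof (cases "even p")
    case True then obtain k where "p = 2 * k" by blast
    then have "x = of_int k" using p by simp
    then show ?thesis by simp
  next
    case False then obtain k where "p = 2 * k + 1" by (metis oddE)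
    then have "x - 1/2 = of_int k" using p by simp
    then show ?thesis by (metis Ints_of_int)
  qed
qed

lemma half_LM: assumes "2 *\<^sub>R b \<in> LM" shows "\<exists>a' \<in> T4. b - a' \<in> LM"
proof -
  have h: "b$1 \<in> \<int> \<or> b$1 - 1/2 \<in> \<int>" "b$2 \<in> \<int> \<or> b$2 - 1/2 \<in> \<int>"
    using assms half_int unfolding LM_iff by auto
  have c: "(e1 /\<^sub>R 2)$1 = 1/2" "(e1 /\<^sub>R 2)$2 = 0" "(e2 /\<^sub>R 2)$1 = 0" "(e2 /\<^sub>R 2)$2 = 1/2" by simp_all
  from h show ?thesis
  proof (elim disjE)
    assume "b$1 \<in> \<int>" "b$2 \<in> \<int>" then have "b - 0 \<in> LM" unfolding LM_iff by simp
    then show ?thesis by blast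
  next
    assume "b$1 - 1/2 \<in> \<int>" "b$2 \<in> \<int>" then have "b - e1 /\<^sub>R 2 \<in> LM" unfolding LM_iff by simp
    then show ?thesis by blast
  next
    assume "b$1 \<in> \<int>" "b$2 - 1/2 \<in> \<int>" then have "b - e2 /\<^sub>R 2 \<in> LM" unfolding LM_iff by simp
    then show ?thesis by blast
  next
    assume "b$1 - 1/2 \<in> \<int>" "b$2 - 1/2 \<in> \<int>" then have "b - (e1 /\<^sub>R 2 + e2 /\<^sub>R 2) \<in> LM" unfolding LM_iff by simp
    then show ?thesis by blast
  qed
qed

lemma reduce:
  assumes b: "2 *\<^sub>R b \<in> LM" and psi: "aff b \<Psi> \<in> affnorm Mgrp" and W: "\<Psi> = W \<or> \<Psi> = - W"
    and words: "\<And>a'. a' \<in> T4 \<Longrightarrow> star Mgrp (aff a' (mat 1) \<circ> aff 0 W) \<in> G \<and> aff a' (mat 1) \<circ> aff 0 W \<in> affnorm Mgrp"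
  shows "star Mgrp (aff b \<Psi>) \<in> G"
proof -
  obtain a' where a: "a' \<in> T4" "b - a' \<in> LM" using half_LM[OF b] by blast
  define \<phi> where "\<phi> = aff a' (mat 1) \<circ> aff 0 W"
  have phi: "\<phi> = aff a' W" unfolding \<phi>_def by (simp add: aff_comp)
  have sw: "star Mgrp \<phi> \<in> G" "\<phi> \<in> affnorm Mgrp" using words[OF a(1)] unfolding \<phi>_def by auto
  have g: "aff (b - a') (mat 1) \<in> Mgrp" unfolding Mgrp_Gam Gam_tr using a(2) .
  have m: "aff 0 (- mat 1) \<in> Mgrp" unfolding Mgrp_Gam Gam_ptr using LM_zero .
  from W show ?thesis
  proof
    assume "\<Psi> = W"
    then have "aff b \<Psi> = aff (b - a') (mat 1) \<circ> \<phi>" unfolding phi by (simp add: aff_comp)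
    then show ?thesis using star_left[OF grpM sw(2) g] sw by simp
  next
    assume "\<Psi> = - W"
    then have e: "aff b \<Psi> = aff (b - a') (mat 1) \<circ> (\<phi> \<circ> aff 0 (- mat 1))" unfolding phi by (simp add: aff_comp)
    have "\<phi> \<circ> aff 0 (- mat 1) \<in> affnorm Mgrp" using affnorm_comp[OF sw(2) affnorm_negI] .
    then have "star Mgrp (aff b \<Psi>) = star Mgrp (\<phi> \<circ> aff 0 (- mat 1))" using e star_left[OF grpM _ g] by simp
    also have "\<dots> = star Mgrp \<phi>" using star_right[OF grpM sw(2) m] .
    finally show ?thesis using sw by simp
  qed
qed

abbreviation SM where "SM \<equiv> Kgrp \<union> {star Mgrp (aff 0 matA), star Mgrp (aff 0 matC)}"
abbreviation SD where "SD \<equiv> Kgrp \<union> {star Mgrp (aff 0 matB), star Mgrp (aff 0 matC)}"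

lemma ints_of_LM:
  assumes "\<And>n. n \<in> LM \<Longrightarrow> \<Psi> *v n \<in> LM"
  shows "\<Psi>$1$1 \<in> \<int>" "\<Psi>$1$2 \<in> \<int>" "\<Psi>$2$1 \<in> \<int>" "\<Psi>$2$2 \<in> \<int>"
  using assms[OF e_LM(1)] assms[OF e_LM(2)] unfolding LM_iff by (simp_all add: mv_comp)

lemma SymM_sub: "Sym Mgrp \<subseteq> gen_on (orbits Mgrp) SM"
proof
  fix f assume f: "f \<in> Sym Mgrp"
  then obtain \<psi> where psi: "\<psi> \<in> affnorm Mgrp" "f = star Mgrp \<psi>" unfolding Sym_def Aff_def by blast
  have pres: "\<forall>Q1 \<in> orbits Mgrp. \<forall>Q2 \<in> orbits Mgrp. orbdist (star Mgrp \<psi> Q1) (star Mgrp \<psi> Q2) = orbdist Q1 Q2"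
    using f psi unfolding Sym_def by blast
  obtain b \<Psi> where d: "\<psi> = aff b \<Psi>" "\<And>n. n \<in> LM \<Longrightarrow> \<Psi> *v n \<in> LM" "2 *\<^sub>R b \<in> LM"
    using affnorm_Gam_dest[OF lat_LatUV psi(1)[unfolded Mgrp_Gam]] by metis
  have iso: "norm (\<Psi> *v v) = norm v" for v
    using analytic[OF lat_LatUV minnorm_LM, of b \<Psi>] psi(1) pres d(1) unfolding Mgrp_Gam by blast
  obtain W where W: "W \<in> {mat 1, matA, matC, matA ** matC}" "\<Psi> = W \<or> \<Psi> = - W"
    using classify_M[OF ints_of_LM[OF d(2)] iso] by blast
  have sA: "star Mgrp (aff 0 matA) \<in> SM" "star Mgrp (aff 0 matC) \<in> SM" by auto
  have lw: "star Mgrp (aff 0 W) \<in> gen_on (orbits Mgrp) SM" "aff 0 W \<in> affnorm Mgrp"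
    using lin_word_M[OF sA W(1)] by auto
  have "star Mgrp (aff b \<Psi>) \<in> gen_on (orbits Mgrp) SM"
    by (rule reduce[OF d(3) psi(1)[unfolded d(1)] W(2)]) (rule trans_word[OF _ _ lw(2) lw(1)]; auto)
  then show "f \<in> gen_on (orbits Mgrp) SM" using psi d by simp
qed

lemma isom_mats: "\<And>v. norm (matA *v v) = norm v" "\<And>v. norm (matC *v v) = norm v"
  by (simp_all add: norm_eq_iff2 mv_comp power2_eq_square algebra_simps)

lemma tr_HP: assumes "P \<in> affgroup" "aff c (mat 1) \<in> affnorm Mgrp" shows "aff c (mat 1) \<in> HP P"
proof -
  obtain p A where P: "P = aff p A" "invertible A" using assms(1) unfolding affgroup_def by blast
  obtain A' where i: "A ** A' = mat 1" "A' ** A = mat 1" using P(2) invertible_def by blast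
  have "cj P (aff c (mat 1)) = aff (A *v c) (mat 1)" using cj_aff_tr[OF i] P(1) by simp
  then have "isom (cj P (aff c (mat 1)))" using isom_aff[of "mat 1"] by simp
  then show ?thesis unfolding HP_def using assms(2) by blast
qed

lemma t_HP: "t1 \<in> HP P" "t2 \<in> HP P" if "P \<in> affgroup"
  using tr_HP[OF that] t_affnorm unfolding t1_def t2_def by auto

lemma Kgrp_HP: assumes "P \<in> affgroup" shows "Kgrp \<subseteq> star Mgrp ` HP P"
  unfolding Kgrp_def t1_def[symmetric] t2_def[symmetric]
  by (rule gen_on_sub[OF grpM _ HP_props[OF affgroup_bij[OF assms]]]) (use t_HP[OF assms] in blast)

lemma SymM_sup: "gen_on (orbits Mgrp) SM \<subseteq> Sym Mgrp"
proof -
  have idg: "id \<in> affgroup" by (rule affgroup_id)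
  have "aff 0 matA \<in> HP id" "aff 0 matC \<in> HP id"
    unfolding HP_def cj_id_P using affnorm_ABC isom_aff isom_mats by auto
  then have S: "SM \<subseteq> star Mgrp ` HP id" using Kgrp_HP[OF idg] by blast
  have "gen_on (orbits Mgrp) SM \<subseteq> star Mgrp ` HP id"
    by (rule gen_on_sub[OF grpM S HP_props[OF bij_id]])
  moreover have "star Mgrp \<psi> \<in> Sym Mgrp" if "\<psi> \<in> HP id" for \<psi>
  proof -
    have p: "\<psi> \<in> affnorm Mgrp" "isom \<psi>" using that unfolding HP_def cj_id_P by auto
    show ?thesis unfolding Sym_def Aff_def using p orbdist_star[OF grpM p] by blast
  qed
  ultimately show ?thesis by blast
qed

lemma isoD_aff:
  assumes "\<And>v. norm (matD *v (B *v v)) = norm (matD *v v)"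
  shows "isom (cj PD (aff b B))"
proof -
  have "norm ((matD ** B ** Dinv) *v u) = norm u" for u
  proof -
    have "(matD ** B ** Dinv) *v u = matD *v (B *v (Dinv *v u))" by (simp add: matrix_vector_mul_assoc matrix_mul_assoc)
    moreover have "matD *v (Dinv *v u) = u" using mat_inv_vec[OF D_Dinv(1)] .
    ultimately show ?thesis using assms[of "Dinv *v u"] by simp
  qed
  then show ?thesis unfolding cj_PD_aff by (rule isom_aff)
qed

lemma isoD_mats: "\<And>v. norm (matD *v (matB *v v)) = norm (matD *v v)" "\<And>v. norm (matD *v (matC *v v)) = norm (matD *v v)"
proof -
  fix v
  have "norm (matD *v (matB *v v)) ^ 2 = norm (matD *v v) ^ 2" unfolding normD2
    by (simp add: mv_comp power2_eq_square algebra_simps)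
  then show "norm (matD *v (matB *v v)) = norm (matD *v v)" by (simp add: power2_eq_iff_nonneg)
  have "norm (matD *v (matC *v v)) ^ 2 = norm (matD *v v) ^ 2" unfolding normD2
    by (simp add: mv_comp power2_eq_square algebra_simps)
  then show "norm (matD *v (matC *v v)) = norm (matD *v v)" by (simp add: power2_eq_iff_nonneg)
qed

lemma Mgrp_cj: "Mgrp = cj (inv PD) ` Deltagrp"
  using inv_transport[OF PD_bij Delta_cj] .

lemma SymD_sup: "sharp PD Mgrp Deltagrp ` gen_on (orbits Mgrp) SD \<subseteq> Sym Deltagrp"
proof -
  have "aff 0 matB \<in> HP PD" "aff 0 matC \<in> HP PD"
    unfolding HP_def using affnorm_ABC isoD_aff isoD_mats by auto
  then have S: "SD \<subseteq> star Mgrp ` HP PD" using Kgrp_HP[OF PD_affgroup] by blast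
  have "gen_on (orbits Mgrp) SD \<subseteq> star Mgrp ` HP PD"
    by (rule gen_on_sub[OF grpM S HP_props[OF PD_bij]])
  moreover have "sharp PD Mgrp Deltagrp (star Mgrp \<psi>) \<in> Sym Deltagrp" if "\<psi> \<in> HP PD" for \<psi>
  proof -
    have p: "\<psi> \<in> affnorm Mgrp" "isom (cj PD \<psi>)" using that unfolding HP_def by auto
    have q: "cj PD \<psi> \<in> affnorm Deltagrp" using affnorm_cj_transport[OF PD_affgroup Delta_cj p(1)] .
    have "sharp PD Mgrp Deltagrp (star Mgrp \<psi>) = star Deltagrp (cj PD \<psi>)"
      using sharp_star[OF PD_affgroup Delta_cj grpM grpD p(1)] .
    then show ?thesis unfolding Sym_def Aff_def using q orbdist_star[OF grpD q p(2)] by auto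
  qed
  ultimately show ?thesis by blast
qed

lemma SymD_sub: "Sym Deltagrp \<subseteq> sharp PD Mgrp Deltagrp ` gen_on (orbits Mgrp) SD"
proof
  fix f assume f: "f \<in> Sym Deltagrp"
  then obtain \<phi> where ph: "\<phi> \<in> affnorm Deltagrp" "f = star Deltagrp \<phi>" unfolding Sym_def Aff_def by blast
  have pres: "\<forall>Q1 \<in> orbits Deltagrp. \<forall>Q2 \<in> orbits Deltagrp. orbdist (star Deltagrp \<phi> Q1) (star Deltagrp \<phi> Q2) = orbdist Q1 Q2"
    using f ph unfolding Sym_def by blast
  obtain a \<Phi> where dp: "\<phi> = aff a \<Phi>"
    using affnorm_Gam_dest[OF lat_LatUV ph(1)[unfolded Deltagrp_Gam]] by metis
  have isoP: "norm (\<Phi> *v v) = norm v" for v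
    using analytic[OF lat_LatUV minnorm_LD, of a \<Phi>] ph(1) pres dp unfolding Deltagrp_Gam by blast
  define \<psi> where "\<psi> = cj (inv PD) \<phi>"
  have psi: "\<psi> \<in> affnorm Mgrp"
    unfolding \<psi>_def by (rule affnorm_cj_transport[OF affgroup_inv[OF PD_affgroup] Mgrp_cj ph(1)])
  have cpsi: "cj PD \<psi> = \<phi>" unfolding \<psi>_def using cj_cancel2[OF PD_bij] .
  obtain b \<Psi> where d: "\<psi> = aff b \<Psi>" "\<And>n. n \<in> LM \<Longrightarrow> \<Psi> *v n \<in> LM" "2 *\<^sub>R b \<in> LM"
    using affnorm_Gam_dest[OF lat_LatUV psi[unfolded Mgrp_Gam]] by metis
  have "aff (matD *v b) (matD ** \<Psi> ** Dinv) = aff a \<Phi>" using cpsi d(1) dp cj_PD_aff by simp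
  then have Phi: "\<Phi> = matD ** \<Psi> ** Dinv" unfolding aff_eq_iff by simp
  have iso: "norm (matD *v (\<Psi> *v v)) = norm (matD *v v)" for v
  proof -
    have "\<Phi> *v (matD *v v) = matD *v (\<Psi> *v (Dinv *v (matD *v v)))" unfolding Phi by (simp add: matrix_vector_mul_assoc matrix_mul_assoc)
    also have "Dinv *v (matD *v v) = v" using mat_inv_vec[OF D_Dinv(2)] .
    finally show ?thesis using isoP[of "matD *v v"] by simp
  qed
  obtain W where W: "W \<in> {mat 1, matB, matC, matB ** matC, matC ** matB, matB ** matC ** matB}" "\<Psi> = W \<or> \<Psi> = - W"
    using classify_D[OF ints_of_LM[OF d(2)] iso] by blast
  have sB: "star Mgrp (aff 0 matB) \<in> SD" "star Mgrp (aff 0 matC) \<in> SD" by auto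
  have lw: "star Mgrp (aff 0 W) \<in> gen_on (orbits Mgrp) SD" "aff 0 W \<in> affnorm Mgrp"
    using lin_word_D[OF sB W(1)] by auto
  have g: "star Mgrp (aff b \<Psi>) \<in> gen_on (orbits Mgrp) SD"
    by (rule reduce[OF d(3) psi[unfolded d(1)] W(2)]) (rule trans_word[OF _ _ lw(2) lw(1)]; auto)
  have "sharp PD Mgrp Deltagrp (star Mgrp \<psi>) = f"
    using sharp_star[OF PD_affgroup Delta_cj grpM grpD psi] cpsi ph(2) by simp
  then show "f \<in> sharp PD Mgrp Deltagrp ` gen_on (orbits Mgrp) SD" using g d(1) by blast
qed

theorem lemma24:
  shows "Sym Mgrp = gen_on (orbits Mgrp) (Kgrp \<union> {star Mgrp (aff 0 matA), star Mgrp (aff 0 matC)})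
    \<and> (\<lambda>g. aff 0 matD \<circ> g \<circ> inv (aff 0 matD)) ` Mgrp = Deltagrp
    \<and> bij_betw (sharp (aff 0 matD) Mgrp Deltagrp) (Aff Mgrp) (Aff Deltagrp)
    \<and> (\<forall>f \<in> Aff Mgrp. \<forall>g \<in> Aff Mgrp.
           sharp (aff 0 matD) Mgrp Deltagrp (compose (orbits Mgrp) f g)
           = compose (orbits Deltagrp) (sharp (aff 0 matD) Mgrp Deltagrp f) (sharp (aff 0 matD) Mgrp Deltagrp g))
    \<and> Sym Deltagrp = sharp (aff 0 matD) Mgrp Deltagrp ` gen_on (orbits Mgrp) (Kgrp \<union> {star Mgrp (aff 0 matB), star Mgrp (aff 0 matC)})"
proof (intro conjI)
  show "Sym Mgrp = gen_on (orbits Mgrp) (Kgrp \<union> {star Mgrp (aff 0 matA), star Mgrp (aff 0 matC)})"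
    using SymM_sub SymM_sup by blast
  show "(\<lambda>g. aff 0 matD \<circ> g \<circ> inv (aff 0 matD)) ` Mgrp = Deltagrp" by (rule part2)
  show "bij_betw (sharp (aff 0 matD) Mgrp Deltagrp) (Aff Mgrp) (Aff Deltagrp)"
    using sharp_props(1)[OF PD_affgroup Delta_cj grpM grpD] unfolding PD_def .
  show "\<forall>f \<in> Aff Mgrp. \<forall>g \<in> Aff Mgrp.
           sharp (aff 0 matD) Mgrp Deltagrp (compose (orbits Mgrp) f g)
           = compose (orbits Deltagrp) (sharp (aff 0 matD) Mgrp Deltagrp f) (sharp (aff 0 matD) Mgrp Deltagrp g)"
    using sharp_props(2)[OF PD_affgroup Delta_cj grpM grpD] unfolding PD_def .
  show "Sym Deltagrp = sharp (aff 0 matD) Mgrp Deltagrp ` gen_on (orbits Mgrp) (Kgrp \<union> {star Mgrp (aff 0 matB), star Mgrp (aff 0 matC)})"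
    using SymD_sub SymD_sup unfolding PD_def by blast
qed

end
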